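(* Let $\mathbf a$ be a weight and for $m\in\{2,3,\dots\}$ set $\Psi_{m,\mathbf a}(t)=\mathbf a(1)^t+\cdots+\mathbf a(m)^t$. (i) If $m\in\{2,3,\dots\}$, then $\mathbb T^{m,\mathbf a}$ is Ahlfors $s$-regular, where $s$ is the unique solution of $\Psi_{m,\mathbf a}(s)=1$. (ii) If there exists $s>0$ such that $\lim_{m\to\infty}\Psi_{m,\mathbf a}(s)<1$, then the Hausdorff dimension of $\mathbb T^{\infty,\mathbf a}$ is at most $s$.
   Context: An alphabet is $A=\mathbb N$ or $\{1,\dots,m\}$. $A^k$: words of length $k$ ($A^0=\{\varepsilon\}$), $A^*=\bigcup_kA^k$, $A^{\mathbb N}$: infinite words; $A^n_u$, $A^{\mathbb N}_u$: words beginning with $u\in A^*$; $w(n)$: length-$n$ prefix; $i^{(k)}$: $k$ copies of $i$. Graphs $G^A_k=(A^k,E^A_k)$: $E^A_1=\{\{1,i\}:i\in A\setminus\{1\}\}$, $E^A_{k+1}=\{\{12^{(k)},i1^{(k)}\}:i\in A\setminus\{1\}\}\cup\{\{iw,iu\}:i\in A,\{w,u\}\in E^A_k\}$. $A^{\mathbb N}_{u_1}\wedge A^{\mathbb N}_{u_2}$: the $w\in A^{\mathbb N}_{u_1}$ such that for every $n>\max\{|u_1|,|u_2|\}$ some $u\in A^n_{u_2}$ has $\{w(n),u\}\in E^A_n$, together with the symmetric set. Chain joining $w,w'$: list $A^{\mathbb N}_{v_1},\dots,A^{\mathbb N}_{v_N}$, $w\in A^{\mathbb N}_{v_1}$, $w'\in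 A^{\mathbb N}_{v_N}$, consecutive $\wedge$ nonempty. Weight: non-increasing $\mathbf a:\mathbb N\to(0,1/2]$, $\mathbf a(1)=\mathbf a(2)=1/2$, $\mathbf a(i)\to0$; $\Delta_{\mathbf a}(i_1\cdots i_k)=\prod\mathbf a(i_j)$, $\Delta_{\mathbf a}(\varepsilon)=1$. $\rho_{A,\mathbf a}(w,u)=\inf\sum_{i=1}^N\Delta_{\mathbf a}(v_i)$ over chains; $\mathbb T^{A,\mathbf a}=A^{\mathbb N}/\{\rho_{A,\mathbf a}=0\}$ with the induced metric; $\mathbb T^{m,\mathbf a}=\mathbb T^{\{1,\dots,m\},\mathbf a}$, $\mathbb T^{\infty,\mathbf a}=\mathbb T^{\mathbb N,\mathbf a}$. A metric space $X$ is Ahlfors $s$-regular if there are a measure $\mu$ on $X$ and $C>1$ with $C^{-1}r^s\le\mu(B(x,r))\le Cr^s$ for all $x\in X$ and $r\in(0,\mathrm{diam}X)$. *)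

theory Defs
  imports "HOL-Analysis.Analysis"
begin

text \<open>Letters are positive natural numbers; an alphabet is a set A of them
  ({1..m} or the whole of {1..}).\<close>

definition fwords :: "nat set \<Rightarrow> nat \<Rightarrow> nat list set" where
  "fwords A k = {w. length w = k \<and> set w \<subseteq> A}"

definition allfwords :: "nat set \<Rightarrow> nat list set" where
  "allfwords A = (\<Union>k. fwords A k)"

definition iwords :: "nat set \<Rightarrow> (nat \<Rightarrow> nat) set" where
  "iwords A = {w. \<forall>n. w n \<in> A}"

definition pref :: "(nat \<Rightarrow> nat) \<Rightarrow> nat \<Rightarrow> nat list" where
  "pref w n = map w [0..<n]"

definition fcyl :: "nat set \<Rightarrow> nat \<Rightarrow> nat list \<Rightarrow> nat list set" where
  "fcyl A n u = {v \<in> fwords A n. take (length u) v = u}"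

definition icyl :: "nat set \<Rightarrow> nat list \<Rightarrow> (nat \<Rightarrow> nat) set" where
  "icyl A u = {w \<in> iwords A. pref w (length u) = u}"

fun edges :: "nat set \<Rightarrow> nat \<Rightarrow> nat list set set" where
  "edges A 0 = {}"
| "edges A (Suc 0) = {{[1], [i]} | i. i \<in> A - {1}}"
| "edges A (Suc (Suc k)) =
     {{1 # replicate (Suc k) 2, i # replicate (Suc k) 1} | i. i \<in> A - {1}}
     \<union> {{i # w, i # u} | i w u. i \<in> A \<and> {w, u} \<in> edges A (Suc k)}"

definition wedge1 :: "nat set \<Rightarrow> nat list \<Rightarrow> nat list \<Rightarrow> (nat \<Rightarrow> nat) set" where
  "wedge1 A u1 u2 = {w \<in> icyl A u1. \<forall>n > max (length u1) (length u2).
      \<exists>u \<in> fcyl A n u2. {pref w n, u} \<in> edges A n}"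

definition wedge :: "nat set \<Rightarrow> nat list \<Rightarrow> nat list \<Rightarrow> (nat \<Rightarrow> nat) set" where
  "wedge A u1 u2 = wedge1 A u1 u2 \<union> wedge1 A u2 u1"

definition is_chain :: "nat set \<Rightarrow> (nat \<Rightarrow> nat) \<Rightarrow> (nat \<Rightarrow> nat) \<Rightarrow> nat list list \<Rightarrow> bool" where
  "is_chain A w w' vs \<longleftrightarrow> vs \<noteq> [] \<and> set vs \<subseteq> allfwords A \<and>
     w \<in> icyl A (hd vs) \<and> w' \<in> icyl A (last vs) \<and>
     (\<forall>i. Suc i < length vs \<longrightarrow> wedge A (vs ! i) (vs ! Suc i) \<noteq> {})"

definition is_weight :: "(nat \<Rightarrow> real) \<Rightarrow> bool" where
  "is_weight a \<longleftrightarrow> (\<forall>i j. 1 \<le> i \<longrightarrow> i \<le> j \<longrightarrow> a j \<le> a i) \<and>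
     (\<forall>i\<ge>1. 0 < a i \<and> a i \<le> 1/2) \<and> a 1 = 1/2 \<and> a 2 = 1/2 \<and> a \<longlonglongrightarrow> 0"

definition Delta :: "(nat \<Rightarrow> real) \<Rightarrow> nat list \<Rightarrow> real" where
  "Delta a v = prod_list (map a v)"

definition rho :: "nat set \<Rightarrow> (nat \<Rightarrow> real) \<Rightarrow> (nat \<Rightarrow> nat) \<Rightarrow> (nat \<Rightarrow> nat) \<Rightarrow> real" where
  "rho A a w u = Inf {sum_list (map (Delta a) vs) | vs. is_chain A w u vs}"

definition Tcarrier :: "nat set \<Rightarrow> (nat \<Rightarrow> real) \<Rightarrow> (nat \<Rightarrow> nat) set set" where
  "Tcarrier A a = iwords A // {(x, y). x \<in> iwords A \<and> y \<in> iwords A \<and> rho A a x y = 0}"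

definition Tdist :: "nat set \<Rightarrow> (nat \<Rightarrow> real) \<Rightarrow> (nat \<Rightarrow> nat) set \<Rightarrow> (nat \<Rightarrow> nat) set \<Rightarrow> real" where
  "Tdist A a X Y = rho A a (SOME x. x \<in> X) (SOME y. y \<in> Y)"

definition mball' :: "'a set \<Rightarrow> ('a \<Rightarrow> 'a \<Rightarrow> real) \<Rightarrow> 'a \<Rightarrow> real \<Rightarrow> 'a set" where
  "mball' M d x r = {y \<in> M. d x y < r}"

definition diam' :: "('a \<Rightarrow> 'a \<Rightarrow> real) \<Rightarrow> 'a set \<Rightarrow> real" where
  "diam' d U = (if U = {} then 0 else Sup {d x y | x y. x \<in> U \<and> y \<in> U})"

definition mopen' :: "'a set \<Rightarrow> ('a \<Rightarrow> 'a \<Rightarrow> real) \<Rightarrow> 'a set \<Rightarrow> bool" where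
  "mopen' M d U \<longleftrightarrow> U \<subseteq> M \<and> (\<forall>x\<in>U. \<exists>r>0. mball' M d x r \<subseteq> U)"

definition borel_sets' :: "'a set \<Rightarrow> ('a \<Rightarrow> 'a \<Rightarrow> real) \<Rightarrow> 'a set set" where
  "borel_sets' M d = sigma_sets M {U. mopen' M d U}"

definition ahlfors_regular :: "'a set \<Rightarrow> ('a \<Rightarrow> 'a \<Rightarrow> real) \<Rightarrow> real \<Rightarrow> bool" where
  "ahlfors_regular M d s \<longleftrightarrow> (\<exists>(\<mu>::'a measure) C. space \<mu> = M \<and> sets \<mu> = borel_sets' M d \<and> C > 1 \<and>
     (\<forall>x\<in>M. \<forall>r. 0 < r \<and> r < diam' d M \<longrightarrow>
        ennreal (r powr s / C) \<le> emeasure \<mu> (mball' M d x r) \<and>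
        emeasure \<mu> (mball' M d x r) \<le> ennreal (C * r powr s)))"

definition hcontrib :: "('a \<Rightarrow> 'a \<Rightarrow> real) \<Rightarrow> real \<Rightarrow> 'a set \<Rightarrow> ennreal" where
  "hcontrib d s U = (if U = {} then 0 else if s = 0 then 1 else ennreal (diam' d U powr s))"

definition hausdorff_pre :: "'a set \<Rightarrow> ('a \<Rightarrow> 'a \<Rightarrow> real) \<Rightarrow> real \<Rightarrow> real \<Rightarrow> 'a set \<Rightarrow> ennreal" where
  "hausdorff_pre M d s \<delta> E = (INF U \<in> {U :: nat \<Rightarrow> 'a set. (\<forall>i. U i \<subseteq> M \<and> diam' d (U i) \<le> \<delta>) \<and> E \<subseteq> (\<Union>i. U i)}.
      (\<Sum>i. hcontrib d s (U i)))"

definition hausdorff_measure :: "'a set \<Rightarrow> ('a \<Rightarrow> 'a \<Rightarrow> real) \<Rightarrow> real \<Rightarrow> 'a set \<Rightarrow> ennreal" where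
  "hausdorff_measure M d s E = (SUP \<delta> \<in> {0<..}. hausdorff_pre M d s \<delta> E)"

definition hausdorff_dim :: "'a set \<Rightarrow> ('a \<Rightarrow> 'a \<Rightarrow> real) \<Rightarrow> ereal" where
  "hausdorff_dim M d = Inf {ereal t | t. 0 \<le> t \<and> hausdorff_measure M d t M = 0}"

definition Psi :: "nat \<Rightarrow> (nat \<Rightarrow> real) \<Rightarrow> real \<Rightarrow> real" where
  "Psi m a t = (\<Sum>i=1..m. a i powr t)"

end

theory Submission
  imports Defs "HOL-Probability.Probability"
begin


definition conc :: "nat list \<Rightarrow> (nat \<Rightarrow> nat) \<Rightarrow> (nat \<Rightarrow> nat)" where
  "conc u f = (\<lambda>n. if n < length u then u ! n else f (n - length u))"

definition cst :: "nat \<Rightarrow> (nat \<Rightarrow> nat)" where "cst c = (\<lambda>_. c)"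

definition stl :: "(nat \<Rightarrow> nat) \<Rightarrow> (nat \<Rightarrow> nat)" where "stl f = (\<lambda>n. f (Suc n))"

definition shiftw :: "nat \<Rightarrow> (nat \<Rightarrow> nat) \<Rightarrow> (nat \<Rightarrow> nat)" where "shiftw k f = (\<lambda>n. f (n + k))"

lemma conc_Nil[simp]: "conc [] f = f" by (simp add: conc_def)
lemma conc_Cons0[simp]: "conc (c # u) f 0 = c" by (simp add: conc_def)
lemma stl_conc_Cons[simp]: "stl (conc (c # u) f) = conc u f"
  by (auto simp: conc_def stl_def fun_eq_iff)
lemma conc_append: "conc (u @ v) f = conc u (conc v f)"
  by (auto simp: conc_def fun_eq_iff nth_append)
lemma cst_apply[simp]: "cst c n = c" by (simp add: cst_def)
lemma stl_cst[simp]: "stl (cst c) = cst c" by (simp add: cst_def stl_def)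
lemma conc_replicate_cst: "conc (replicate k c) (cst c) = cst c"
  by (auto simp: conc_def fun_eq_iff)

lemma pref_eq_iff: "pref y n = w \<longleftrightarrow> length w = n \<and> (\<forall>i<n. y i = w ! i)"
  by (auto simp: pref_def list_eq_iff_nth_eq)

lemma length_pref[simp]: "length (pref y n) = n" by (simp add: pref_def)
lemma nth_pref[simp]: "i < n \<Longrightarrow> pref y n ! i = y i" by (simp add: pref_def)

lemma conc_shiftw: "(\<forall>i<length w. y i = w ! i) \<Longrightarrow> y = conc w (shiftw (length w) y)"
  by (auto simp: conc_def shiftw_def fun_eq_iff)

lemma conc_nth_lt[simp]: "n < length u \<Longrightarrow> conc u f n = u ! n" by (simp add: conc_def)
lemma conc_nth_ge: "length u \<le> n \<Longrightarrow> conc u f n = f (n - length u)" by (simp add: conc_def)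

lemma Delta_Nil[simp]: "Delta a [] = 1" by (simp add: Delta_def)
lemma Delta_Cons[simp]: "Delta a (c # v) = a c * Delta a v" by (simp add: Delta_def)
lemma Delta_append: "Delta a (u @ v) = Delta a u * Delta a v" by (simp add: Delta_def)

subsection \<open>The spine coordinate H\<close>

definition hterm :: "(nat \<Rightarrow> nat) \<Rightarrow> nat \<Rightarrow> real" where
  "hterm z k = (if (\<forall>l<k. z l = 1 \<or> z l = 2) \<and> z k \<noteq> 1 then (1/2) ^ Suc k else 0)"

definition H :: "(nat \<Rightarrow> nat) \<Rightarrow> real" where "H z = suminf (hterm z)"

lemma hterm_nonneg: "0 \<le> hterm z k" by (simp add: hterm_def)
lemma hterm_le: "hterm z k \<le> (1/2) ^ Suc k" by (simp add: hterm_def)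

lemma summable_hterm: "summable (hterm z)"
proof (rule summable_comparison_test[of _ "\<lambda>k. (1/2::real) ^ Suc k"])
  show "\<exists>N. \<forall>n\<ge>N. norm (hterm z n) \<le> (1 / 2) ^ Suc n"
    using hterm_nonneg hterm_le by auto
  show "summable (\<lambda>k. (1/2::real) ^ Suc k)" by simp
qed

lemma H_nonneg: "0 \<le> H z"
  unfolding H_def by (rule suminf_nonneg[OF summable_hterm hterm_nonneg])

lemma geo_half_sum: "(\<lambda>k. (1/2::real) ^ Suc k) sums 1"
proof -
  have "(\<lambda>k. (1/2::real) ^ k) sums 2" using geometric_sums[of "1/2::real"] by simp
  then have "(\<lambda>k. (1/2) * (1/2::real) ^ k) sums ((1/2) * 2)" by (rule sums_mult)
  then show ?thesis by simp
qed

lemma H_le1: "H z \<le> 1"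
proof -
  have "H z \<le> (\<Sum>k. (1/2::real) ^ Suc k)"
    unfolding H_def
    by (rule suminf_le[OF hterm_le summable_hterm]) (use geo_half_sum sums_summable in blast)
  also have "\<dots> = 1" using geo_half_sum sums_unique by metis
  finally show ?thesis .
qed

lemma H_rec: "H z = (if z 0 = 1 then H (stl z) / 2 else if z 0 = 2 then 1/2 + H (stl z) / 2 else 1/2)"
proof -
  have s: "summable (hterm z)" by (rule summable_hterm)
  have eq: "H z = hterm z 0 + (\<Sum>k. hterm z (Suc k))"
    unfolding H_def using suminf_split_head[OF s] by simp
  have tail: "hterm z (Suc k) = (if z 0 = 1 \<or> z 0 = 2 then hterm (stl z) k / 2 else 0)" for k
  proof -
    have "(\<forall>l<Suc k. z l = 1 \<or> z l = 2) \<longleftrightarrow> (z 0 = 1 \<or> z 0 = 2) \<and> (\<forall>l<k. stl z l = 1 \<or> stl z l = 2)"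
      by (auto simp: stl_def less_Suc_eq_0_disj)
    then show ?thesis by (auto simp: hterm_def stl_def)
  qed
  show ?thesis
  proof (cases "z 0 = 1 \<or> z 0 = 2")
    case True
    have "(\<lambda>k. hterm z (Suc k)) = (\<lambda>k. hterm (stl z) k / 2)" using True tail by (simp add: fun_eq_iff)
    then have "(\<Sum>k. hterm z (Suc k)) = (\<Sum>k. hterm (stl z) k / 2)" by simp
    also have "\<dots> = H (stl z) / 2" unfolding H_def
      by (rule suminf_divide[OF summable_hterm])
    finally show ?thesis using True eq by (auto simp: hterm_def)
  next
    case False
    then show ?thesis using eq tail by (auto simp: hterm_def)
  qed
qed

lemma H_cst1: "H (cst 1) = 0"
  unfolding H_def hterm_def by simp

lemma H_cst2: "H (cst 2) = 1"
proof -
  have "hterm (cst 2) = (\<lambda>k. (1/2::real) ^ Suc k)" by (auto simp: hterm_def fun_eq_iff)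
  then show ?thesis unfolding H_def using geo_half_sum sums_unique by metis
qed

lemma H_Cons: "H (conc [c] z) = (if c = 1 then H z / 2 else if c = 2 then 1/2 + H z / 2 else 1/2)"
  by (subst H_rec) (simp add: stl_conc_Cons[of c "[]", simplified])


declare cst_apply[simp del]

fun Pt :: "(nat \<Rightarrow> real) \<Rightarrow> nat list \<Rightarrow> (nat \<Rightarrow> nat) \<Rightarrow> real" where
  "Pt a [] z = H z"
| "Pt a (c # t) z = (if z 0 = c then a c * Pt a t (stl z)
                     else a c * Pt a t (cst (if c = 1 then 2 else 1)))"

definition jL :: "nat list \<Rightarrow> (nat \<Rightarrow> nat)" where "jL s = conc s (conc [1] (cst 2))"
definition jR :: "nat list \<Rightarrow> nat \<Rightarrow> (nat \<Rightarrow> nat)" where "jR s c = conc s (conc [c] (cst 1))"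

lemma H_cst1'[simp]: "H (cst (Suc 0)) = 0" "H (\<lambda>_. Suc 0) = 0" "H (\<lambda>_. 1) = 0"
  using H_cst1 by (simp_all add: cst_def)
lemma H_cst2'[simp]: "H (cst 2) = 1" "H (\<lambda>_. 2) = 1"
  using H_cst2 by (simp_all add: cst_def)

lemma H_conc_Cons: "H (conc (d # s) f) = (if d = 1 then H (conc s f) / 2 else if d = 2 then 1/2 + H (conc s f) / 2 else 1/2)"
  by (subst H_rec) simp

lemma H_jL_jR: "c \<noteq> 1 \<Longrightarrow> H (jL s) = H (jR s c)"
proof (induction s)
  case Nil
  then show ?case unfolding jL_def jR_def by (simp add: H_Cons H_cst1 H_cst2)
next
  case (Cons d s)
  then show ?case unfolding jL_def jR_def by (simp add: H_conc_Cons)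
qed

lemma Pt_jL_jR: "c \<noteq> 1 \<Longrightarrow> Pt a t (jL s) = Pt a t (jR s c)"
proof (induction t arbitrary: s)
  case Nil
  then show ?case using H_jL_jR by simp
next
  case (Cons d t)
  show ?case
  proof (cases s)
    case Nil
    have l0: "jL [] 0 = 1" "jR [] c 0 = c" by (simp_all add: jL_def jR_def)
    have l1: "stl (jL []) = cst 2" "stl (jR [] c) = cst 1"
      by (simp_all add: jL_def jR_def stl_conc_Cons[of _ "[]", simplified])
    have c1: "c \<noteq> 1" by (rule Cons.prems)
    have "Pt a (d # t) (jL []) = Pt a (d # t) (jR [] c)"
    proof (cases "d = 1")
      case True
      then show ?thesis using c1 by (simp only: Pt.simps l0 l1 if_True if_False) simp
    next
      case d1: False
      show ?thesis
      proof (cases "d = c")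
        case True
        then show ?thesis using c1 d1 by (simp only: Pt.simps l0 l1 if_True if_False) simp
      next
        case False
        then show ?thesis using c1 d1 by (simp only: Pt.simps l0 l1) simp
      qed
    qed
    then show ?thesis unfolding Nil .
  next
    case (Cons e s')
    have st: "stl (jL (e # s')) = jL s'" "stl (jR (e # s') c) = jR s' c"
      by (simp_all add: jL_def jR_def)
    have z0: "jL (e # s') 0 = e" "jR (e # s') c 0 = e" by (simp_all add: jL_def jR_def)
    have "Pt a (d # t) (jL (e # s')) = Pt a (d # t) (jR (e # s') c)"
    proof (cases "e = d")
      case True
      have z0': "jL (e # s') 0 = d" "jR (e # s') c 0 = d" using z0 True by simp_all
      show ?thesis using Cons.IH[OF Cons.prems, of s'] by (simp only: Pt.simps st z0' if_True)
    next
      case False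
      then show ?thesis by (simp only: Pt.simps st z0 if_False)
    qed
    then show ?thesis unfolding Cons .
  qed
qed

lemma Pt_conc: "Pt a w (conc w z) = Delta a w * H z"
  by (induction w) auto

lemma Pt_cst: "e \<in> {1, 2} \<Longrightarrow> Pt a t (cst e) = 0 \<or> Pt a t (cst e) = Delta a t"
proof (induction t arbitrary: e)
  case Nil
  then show ?case by (auto simp: H_cst1 H_cst2)
next
  case (Cons c t)
  define e' where "e' = (if e = c then e else if c = 1 then 2 else 1)"
  have e': "e' \<in> {1, 2}" using Cons.prems by (auto simp: e'_def)
  have "Pt a (c # t) (cst e) = a c * Pt a t (cst e')"
    by (simp add: cst_apply e'_def)
  then show ?case using Cons.IH[OF e'] by auto
qed

lemma Pt_out: "\<not> (\<forall>i<length t. y i = t ! i) \<Longrightarrow> Pt a t y = 0 \<or> Pt a t y = Delta a t"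
proof (induction t arbitrary: y)
  case Nil
  then show ?case by simp
next
  case (Cons c t)
  show ?case
  proof (cases "y 0 = c")
    case True
    then have "\<not> (\<forall>i<length t. stl y i = t ! i)"
      using Cons.prems by (auto simp: stl_def less_Suc_eq_0_disj)
    then show ?thesis using Cons.IH True by auto
  next
    case False
    have "(if c = 1 then 2 else 1) \<in> {1, 2::nat}" by auto
    then show ?thesis using Pt_cst[of "if c = 1 then 2 else 1" a t] False by auto
  qed
qed

lemma Pt_out0: "c \<notin> {1, 2} \<Longrightarrow> \<not> (\<forall>i<Suc (length t). y i = (t @ [c]) ! i) \<Longrightarrow> Pt a (t @ [c]) y = 0"
proof (induction t arbitrary: y)
  case Nil
  then show ?case by (simp add: H_cst1)
next
  case (Cons d t)
  show ?case
  proof (cases "y 0 = d")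
    case True
    then have "\<not> (\<forall>i<Suc (length t). stl y i = (t @ [c]) ! i)"
      using Cons.prems by (auto simp: stl_def less_Suc_eq_0_disj)
    then show ?thesis using Cons.IH Cons.prems True by auto
  next
    case False
    have "\<not> (\<forall>i<Suc (length t). cst (if d = 1 then 2 else 1) i = (t @ [c]) ! i)"
      using Cons.prems(1) by (auto intro!: exI[of _ "length t"] simp: cst_apply)
    then show ?thesis using Cons.IH Cons.prems False by auto
  qed
qed

lemma edges_char: "e \<in> edges A n \<Longrightarrow>
   \<exists>s j c. c \<in> A - {1} \<and> set s \<subseteq> A \<and> e = {s @ 1 # replicate j 2, s @ c # replicate j 1}"
proof (induction A n arbitrary: e rule: edges.induct)
  case (1 A)
  then show ?case by simp
next
  case (2 A)
  have "e \<in> {{[1], [i]} | i. i \<in> A - {1}}" using "2.prems" by (simp only: edges.simps)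
  then obtain i where i: "i \<in> A - {1}" "e = {[1], [i]}" by (elim CollectE exE conjE) 
  have e: "e = {[] @ 1 # replicate 0 2, [] @ i # replicate 0 1}" using i by simp
  show ?case by (rule exI[of _ "[]"], rule exI[of _ 0], rule exI[of _ i]) (simp only: e, use i in simp)
next
  case (3 A k)
  have "e \<in> {{1 # replicate (Suc k) 2, i # replicate (Suc k) 1} | i. i \<in> A - {1}}
     \<union> {{i # w, i # u} | i w u. i \<in> A \<and> {w, u} \<in> edges A (Suc k)}"
    using "3.prems" by (simp only: edges.simps)
  then show ?case
  proof (elim UnE)
    assume "e \<in> {{1 # replicate (Suc k) 2, i # replicate (Suc k) 1} | i. i \<in> A - {1}}"
    then obtain i where i: "i \<in> A - {1}" "e = {1 # replicate (Suc k) 2, i # replicate (Suc k) 1}"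
      by (elim CollectE exE conjE)
    have e: "e = {[] @ 1 # replicate (Suc k) 2, [] @ i # replicate (Suc k) 1}" using i by simp
    show ?thesis by (rule exI[of _ "[]"], rule exI[of _ "Suc k"], rule exI[of _ i]) (simp only: e, use i in simp)
  next
    assume "e \<in> {{i # w, i # u} | i w u. i \<in> A \<and> {w, u} \<in> edges A (Suc k)}"
    then obtain i w u where iwu: "i \<in> A" "{w, u} \<in> edges A (Suc k)" "e = {i # w, i # u}"
      by (elim CollectE exE conjE)
    from "3.IH"[OF iwu(2)] obtain s j c where sjc: "c \<in> A - {1}" "set s \<subseteq> A"
      "{w, u} = {s @ 1 # replicate j 2, s @ c # replicate j 1}" by (elim exE conjE)
    have e: "e = {(i # s) @ 1 # replicate j 2, (i # s) @ c # replicate j 1}"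
      using sjc(3) iwu(3) by (auto simp: doubleton_eq_iff)
    have si: "set (i # s) \<subseteq> A" using sjc iwu by simp
    show ?thesis by (rule exI[of _ "i # s"], rule exI[of _ j], rule exI[of _ c]) (simp only: e, use sjc si in simp)
  qed
qed

lemma edges_intro: "c \<in> A - {1} \<Longrightarrow> set s \<subseteq> A \<Longrightarrow>
   {s @ 1 # replicate j 2, s @ c # replicate j 1} \<in> edges A (length s + 1 + j)"
proof (induction s)
  case Nil
  show ?case
  proof (cases j)
    case 0
    have "{[1], [c]} \<in> {{[1], [i]} | i. i \<in> A - {1}}"
      unfolding mem_Collect_eq by (rule exI[of _ c]) (use Nil in simp)
    then show ?thesis using 0 by (simp only: edges.simps) simp
  next
    case (Suc k)
    have "{1 # replicate (Suc k) 2, c # replicate (Suc k) 1} \<in>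
      {{1 # replicate (Suc k) 2, i # replicate (Suc k) 1} | i. i \<in> A - {1}}"
      unfolding mem_Collect_eq by (rule exI[of _ c]) (use Nil in simp)
    then have "{1 # replicate (Suc k) 2, c # replicate (Suc k) 1} \<in> edges A (Suc (Suc k))"
      unfolding edges.simps by (rule UnI1)
    then show ?thesis using Suc by simp
  qed
next
  case (Cons i s)
  have IHc: "{s @ 1 # replicate j 2, s @ c # replicate j 1} \<in> edges A (Suc (length s + j))" using Cons by simp
  have "{i # (s @ 1 # replicate j 2), i # (s @ c # replicate j 1)} \<in>
     {{i # w, i # u} | i w u. i \<in> A \<and> {w, u} \<in> edges A (Suc (length s + j))}"
    unfolding mem_Collect_eq
    by (rule exI[of _ i], rule exI[of _ "s @ 1 # replicate j 2"], rule exI[of _ "s @ c # replicate j 1"])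
       (use Cons.prems IHc in simp)
  then have "{(i # s) @ 1 # replicate j 2, (i # s) @ c # replicate j 1} \<in> edges A (Suc (Suc (length s + j)))"
    unfolding edges.simps append_Cons by (rule UnI2)
  then show ?case by simp
qed

lemma jL_nth: "i < length s + 1 + j \<Longrightarrow> jL s i = (s @ 1 # replicate j 2) ! i"
  by (auto simp: jL_def conc_def nth_append nth_Cons' not_less cst_apply)
lemma jR_nth: "i < length s + 1 + j \<Longrightarrow> jR s c i = (s @ c # replicate j 1) ! i"
  by (auto simp: jR_def conc_def nth_append nth_Cons' not_less cst_apply)

locale wset =
  fixes A :: "nat set" and a :: "nat \<Rightarrow> real"
  assumes A1: "1 \<in> A" and A2: "2 \<in> A" and A0: "A \<subseteq> {1..}" and W: "is_weight a"
begin

lemma a_pos: "c \<in> A \<Longrightarrow> 0 < a c" using W A0 unfolding is_weight_def by auto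
lemma a_le: "c \<in> A \<Longrightarrow> a c \<le> 1/2" using W A0 unfolding is_weight_def by auto
lemma a1: "a 1 = 1/2" and a2: "a 2 = 1/2" using W unfolding is_weight_def by auto
lemma a1'[simp]: "a (Suc 0) = 1/2" using a1 by simp
lemma a2'[simp]: "a 2 = 1/2" using a2 by simp

lemma Delta_nonneg: "set v \<subseteq> A \<Longrightarrow> 0 \<le> Delta a v"
  by (induction v) (auto intro!: mult_nonneg_nonneg less_imp_le[OF a_pos])

lemma Delta_pos: "set v \<subseteq> A \<Longrightarrow> 0 < Delta a v"
  by (induction v) (auto intro!: mult_pos_pos a_pos)

lemma Delta_le_pow: "set v \<subseteq> A \<Longrightarrow> Delta a v \<le> (1/2) ^ length v"
proof (induction v)
  case Nil
  then show ?case by simp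
next
  case (Cons c v)
  then have "a c * Delta a v \<le> (1/2) * (1/2) ^ length v"
    by (intro mult_mono a_le Delta_nonneg) auto
  then show ?case by simp
qed

lemma Delta_le1: "Delta a v \<le> 1" if "set v \<subseteq> A"
proof -
  have "(1/2::real) ^ length v \<le> 1" by (rule power_le_one) auto
  then show ?thesis using Delta_le_pow[of v] that by linarith
qed

lemma Delta_rep: "e \<in> {1, 2} \<Longrightarrow> Delta a (replicate k e) = (1/2) ^ k"
  by (induction k) (auto simp: a1 a2)

lemma Pt_range: "set t \<subseteq> A \<Longrightarrow> 0 \<le> Pt a t z \<and> Pt a t z \<le> Delta a t"
proof (induction t arbitrary: z)
  case Nil
  then show ?case using H_nonneg H_le1 by simp
next
  case (Cons c t)
  have ac: "0 < a c" using Cons.prems a_pos by auto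
  have "0 \<le> Pt a t w \<and> Pt a t w \<le> Delta a t" for w using Cons by auto
  then show ?case using ac by (auto intro: mult_left_mono)
qed

lemma H_osc: "set v \<subseteq> A \<Longrightarrow> (\<forall>i<length v. z i = v ! i) \<Longrightarrow> (\<forall>i<length v. z' i = v ! i)
   \<Longrightarrow> \<bar>H z - H z'\<bar> \<le> Delta a v"
proof (induction v arbitrary: z z')
  case Nil
  then show ?case using H_nonneg[of z] H_le1[of z] H_nonneg[of z'] H_le1[of z'] by simp
next
  case (Cons c v)
  have z0: "z 0 = c" "z' 0 = c" using Cons.prems by auto
  have "\<forall>i<length v. stl z i = v ! i" "\<forall>i<length v. stl z' i = v ! i"
    using Cons.prems by (auto simp: stl_def)
  then have IH: "\<bar>H (stl z) - H (stl z')\<bar> \<le> Delta a v" using Cons by auto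
  have dn: "0 \<le> Delta a (c # v)" using Cons.prems Delta_nonneg by blast
  show ?case
  proof (cases "c = 1 \<or> c = 2")
    case True
    then have "H z - H z' = (H (stl z) - H (stl z')) / 2"
      by (subst (1 2) H_rec) (auto simp: z0 field_simps)
    then have "\<bar>H z - H z'\<bar> = \<bar>(H (stl z) - H (stl z')) / 2\<bar>" by (simp only:)
    also have "\<dots> = \<bar>H (stl z) - H (stl z')\<bar> / 2" by simp
    finally have "\<bar>H z - H z'\<bar> = \<bar>H (stl z) - H (stl z')\<bar> / 2" .
    also have "\<dots> \<le> Delta a v / 2" using IH by simp
    also have "\<dots> = Delta a (c # v)" using True by (auto simp: a1 a2)
    finally show ?thesis .
  next
    case False
    then have "H z = H z'" by (subst (1 2) H_rec) (auto simp: z0)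
    then show ?thesis using dn by simp
  qed
qed

lemma Pt_osc: "set t \<subseteq> A \<Longrightarrow> set v \<subseteq> A \<Longrightarrow> (\<forall>i<length v. z i = v ! i) \<Longrightarrow> (\<forall>i<length v. z' i = v ! i)
   \<Longrightarrow> \<bar>Pt a t z - Pt a t z'\<bar> \<le> Delta a v"
proof (induction t arbitrary: v z z')
  case Nil
  then show ?case using H_osc by simp
next
  case (Cons c t)
  show ?case
  proof (cases v)
    case Nil
    have "0 \<le> Pt a (c # t) z \<and> Pt a (c # t) z \<le> Delta a (c # t)"
         "0 \<le> Pt a (c # t) z' \<and> Pt a (c # t) z' \<le> Delta a (c # t)"
      using Pt_range Cons.prems by blast+
    moreover have "Delta a (c # t) \<le> 1" using Delta_le1 Cons.prems by blast
    moreover have "\<bar>x - y\<bar> \<le> 1" if "0\<le>x \<and> x \<le> D" "0 \<le> y \<and> y \<le> D" "D \<le> 1" for x y D :: real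
      using that by auto
    ultimately have "\<bar>Pt a (c # t) z - Pt a (c # t) z'\<bar> \<le> 1" by blast
    then show ?thesis using Nil by simp
  next
    case (Cons d v')
    have z0: "z 0 = d" "z' 0 = d" using Cons.prems Cons by auto
    have ac: "0 < a c" using Cons.prems a_pos by auto
    show ?thesis
    proof (cases "d = c")
      case True
      have "\<forall>i<length v'. stl z i = v' ! i" "\<forall>i<length v'. stl z' i = v' ! i"
        using Cons.prems Cons by (auto simp: stl_def)
      then have "\<bar>Pt a t (stl z) - Pt a t (stl z')\<bar> \<le> Delta a v'"
        using Cons.IH[of v' "stl z" "stl z'"] Cons.prems Cons by auto
      then have "a c * \<bar>Pt a t (stl z) - Pt a t (stl z')\<bar> \<le> a c * Delta a v'"
        using ac by (intro mult_left_mono) auto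
      moreover have "Pt a (c # t) z - Pt a (c # t) z' = a c * (Pt a t (stl z) - Pt a t (stl z'))"
        using z0 True by (simp add: algebra_simps)
      moreover have "Delta a v = a c * Delta a v'" using Cons True by simp
      moreover have "\<bar>a c * (Pt a t (stl z) - Pt a t (stl z'))\<bar> = a c * \<bar>Pt a t (stl z) - Pt a t (stl z')\<bar>"
        using ac by (simp add: abs_mult)
      ultimately show ?thesis by simp
    next
      case False
      have "0 \<le> Delta a v" using Delta_nonneg Cons.prems by blast
      moreover have "Pt a (c # t) z = Pt a (c # t) z'" using z0 False by (simp only: Pt.simps) simp
      ultimately show ?thesis by simp
    qed
  qed
qed

end


declare cst_apply[simp del]

lemma half_pow_small: "0 < (e::real) \<Longrightarrow> \<exists>n\<ge>N. (1/2::real) ^ n < e"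
proof -
  assume e: "0 < e"
  obtain n where n: "(1/2::real) ^ n < e" using real_arch_pow_inv[OF e, of "1/2"] by auto
  have "(1/2::real) ^ (n + N) \<le> (1/2) ^ n" by (rule power_decreasing) auto
  then have "(1/2::real) ^ (n + N) < e" using n by linarith
  then show ?thesis by (intro exI[of _ "n + N"] conjI) simp_all
qed

lemma iwords_iff: "w \<in> iwords A \<longleftrightarrow> (\<forall>n. w n \<in> A)" by (simp add: iwords_def)
lemma icyl_iff: "w \<in> icyl A u \<longleftrightarrow> w \<in> iwords A \<and> (\<forall>i<length u. w i = u ! i)"
  by (auto simp: icyl_def pref_eq_iff)
lemma allfwords_iff: "v \<in> allfwords A \<longleftrightarrow> set v \<subseteq> A"
  by (auto simp: allfwords_def fwords_def)
lemma fwords_iff: "v \<in> fwords A n \<longleftrightarrow> length v = n \<and> set v \<subseteq> A"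
  by (auto simp: fwords_def)

lemma icyl_set: "w \<in> icyl A u \<Longrightarrow> set u \<subseteq> A"
proof
  fix x assume w: "w \<in> icyl A u" and x: "x \<in> set u"
  then obtain i where i: "i < length u" "u ! i = x" by (auto simp: in_set_conv_nth)
  have "w i \<in> A" using w by (simp add: icyl_iff iwords_iff)
  moreover have "w i = u ! i" using w i by (simp add: icyl_iff)
  ultimately show "x \<in> A" using i by simp
qed

lemma pref_set: "w \<in> iwords A \<Longrightarrow> set (pref w n) \<subseteq> A"
  by (auto simp: pref_def iwords_iff)

lemma pref_icyl: "w \<in> iwords A \<Longrightarrow> w \<in> icyl A (pref w n)"
  by (simp add: icyl_iff)

lemma icyl_Nil[simp]: "icyl A [] = iwords A" by (auto simp: icyl_iff)

lemma wedge_sym: "wedge A u1 u2 = wedge A u2 u1" by (auto simp: wedge_def)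

lemma allfwords_subset: "set vs \<subseteq> allfwords A \<Longrightarrow> v \<in> set vs \<Longrightarrow> set v \<subseteq> A"
proof -
  assume "set vs \<subseteq> allfwords A" "v \<in> set vs"
  then have "v \<in> allfwords A" by blast
  then show ?thesis by (simp add: allfwords_iff)
qed

context wset
begin

lemma jL_iwords: "set s \<subseteq> A \<Longrightarrow> jL s \<in> iwords A"
  using A1 A2 by (auto simp: iwords_iff jL_def conc_def cst_apply nth_Cons' dest: nth_mem)

lemma jR_iwords: "set s \<subseteq> A \<Longrightarrow> c \<in> A \<Longrightarrow> jR s c \<in> iwords A"
  using A1 A2 by (auto simp: iwords_iff jR_def conc_def cst_apply nth_Cons' dest: nth_mem)

lemma neighbor: assumes "set s \<subseteq> A" "c \<in> A"
  shows "\<exists>c'. c' \<in> A \<and> {s @ [c], s @ [c']} \<in> edges A (Suc (length s))"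
proof (cases "c = 1")
  case True
  have "{s @ 1 # replicate 0 2, s @ 2 # replicate 0 1} \<in> edges A (length s + 1 + 0)"
    by (rule edges_intro) (use assms A2 in auto)
  then show ?thesis using True A2 by (intro exI[of _ 2]) simp
next
  case False
  have "{s @ 1 # replicate 0 2, s @ c # replicate 0 1} \<in> edges A (length s + 1 + 0)"
    by (rule edges_intro) (use assms False in auto)
  then have "{s @ [c], s @ [1]} \<in> edges A (Suc (length s))" by (simp add: insert_commute)
  then show ?thesis using A1 by (intro exI[of _ 1]) simp
qed

lemma wedge1_nested:
  assumes "length u2 \<le> length u1" "w \<in> icyl A u1" "w \<in> icyl A u2"
  shows "w \<in> wedge1 A u1 u2"
  unfolding wedge1_def
proof (intro CollectI conjI allI impI)
  show "w \<in> icyl A u1" by fact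
  fix n assume n: "max (length u1) (length u2) < n"
  have wi: "w \<in> iwords A" using assms by (simp add: icyl_iff)
  define s where "s = pref w (n - 1)"
  have ss: "set s \<subseteq> A" using wi by (simp add: s_def pref_set)
  obtain n' where n': "n = Suc n'" using n by (cases n) auto
  have pw: "pref w n = s @ [w (n - 1)]" by (simp add: s_def pref_def n')
  have cA: "w (n - 1) \<in> A" using wi by (simp add: iwords_iff)
  obtain c' where c': "c' \<in> A" "{s @ [w (n - 1)], s @ [c']} \<in> edges A (Suc (length s))"
    using neighbor[OF ss cA] by blast
  have ln: "Suc (length s) = n" using n by (simp add: s_def)
  have "s @ [c'] \<in> fcyl A n u2"
  proof -
    have "set (s @ [c']) \<subseteq> A" using ss c' by simp
    moreover have "take (length u2) (s @ [c']) = u2"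
    proof -
      have "length u2 < n" using n by simp
      then have "length u2 \<le> length s" by (simp add: s_def)
      then have "take (length u2) (s @ [c']) = take (length u2) s" by simp
      also have "\<dots> = take (length u2) (pref w n)" using \<open>length u2 \<le> length s\<close> pw by simp
      also have "\<dots> = u2"
        using assms(3) n by (auto simp: icyl_iff pref_def list_eq_iff_nth_eq)
      finally show ?thesis .
    qed
    ultimately show ?thesis using ln by (simp add: fcyl_def fwords_iff)
  qed
  moreover have "{pref w n, s @ [c']} \<in> edges A n" using c' pw ln by simp
  ultimately show "\<exists>u\<in>fcyl A n u2. {pref w n, u} \<in> edges A n" by blast
qed

lemma wedge_nonempty: "w \<in> icyl A u1 \<Longrightarrow> w \<in> icyl A u2 \<Longrightarrow> wedge A u1 u2 \<noteq> {}"
proof -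
  assume h: "w \<in> icyl A u1" "w \<in> icyl A u2"
  show ?thesis
  proof (cases "length u2 \<le> length u1")
    case True
    then show ?thesis using wedge1_nested[OF True h] by (auto simp: wedge_def)
  next
    case False
    then show ?thesis using wedge1_nested[of u1 u2 w] h by (auto simp: wedge_def)
  qed
qed

subsection \<open>Chains and Lipschitz functions\<close>

lemma chain_bound_aux:
  assumes osc: "\<And>v z z'. set v \<subseteq> A \<Longrightarrow> z \<in> icyl A v \<Longrightarrow> z' \<in> icyl A v \<Longrightarrow> \<bar>g z - g z'\<bar> \<le> Delta a v"
  and adj: "\<And>u1 u2 e. set u1 \<subseteq> A \<Longrightarrow> set u2 \<subseteq> A \<Longrightarrow> wedge A u1 u2 \<noteq> {} \<Longrightarrow> e > 0 \<Longrightarrow>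
              \<exists>z1\<in>icyl A u1. \<exists>z2\<in>icyl A u2. \<bar>g z1 - g z2\<bar> < e"
  shows "vs \<noteq> [] \<Longrightarrow> set vs \<subseteq> allfwords A \<Longrightarrow> x \<in> icyl A (hd vs) \<Longrightarrow>
     (\<forall>i. Suc i < length vs \<longrightarrow> wedge A (vs ! i) (vs ! Suc i) \<noteq> {}) \<Longrightarrow>
     y \<in> icyl A (last vs) \<Longrightarrow> \<bar>g x - g y\<bar> \<le> sum_list (map (Delta a) vs)"
proof (induction vs arbitrary: y rule: rev_induct)
  case Nil
  then show ?case by simp
next
  case (snoc v vs)
  have vA: "set v \<subseteq> A" using snoc.prems(2) by (simp add: allfwords_iff)
  show ?case
  proof (cases "vs = []")
    case True
    then show ?thesis using snoc.prems osc[OF vA] by simp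
  next
    case False
    have hd: "hd (vs @ [v]) = hd vs" using False by simp
    have w: "\<forall>i. Suc i < length vs \<longrightarrow> wedge A (vs ! i) (vs ! Suc i) \<noteq> {}"
    proof (intro allI impI)
      fix i assume i: "Suc i < length vs"
      then have "Suc i < length (vs @ [v])" by simp
      then have "wedge A ((vs @ [v]) ! i) ((vs @ [v]) ! Suc i) \<noteq> {}" using snoc.prems(4) by blast
      moreover have "(vs @ [v]) ! i = vs ! i" "(vs @ [v]) ! Suc i = vs ! Suc i" using i by (simp_all add: nth_append)
      ultimately show "wedge A (vs ! i) (vs ! Suc i) \<noteq> {}" by simp
    qed
    have wl: "wedge A (last vs) v \<noteq> {}"
    proof -
      have "Suc (length vs - 1) < length (vs @ [v])" using False by simp
      then have "wedge A ((vs @ [v]) ! (length vs - 1)) ((vs @ [v]) ! Suc (length vs - 1)) \<noteq> {}"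
        using snoc.prems(4) by blast
      moreover have "(vs @ [v]) ! (length vs - 1) = last vs" using False
        by (simp add: nth_append last_conv_nth)
      moreover have "(vs @ [v]) ! Suc (length vs - 1) = v" using False by (simp add: nth_append)
      ultimately show ?thesis by simp
    qed
    have lA: "set (last vs) \<subseteq> A"
      by (rule allfwords_subset[of "vs @ [v]"]) (use snoc.prems(2) False in auto)
    show ?thesis
    proof (rule field_le_epsilon)
      fix e :: real assume e: "0 < e"
      obtain z1 z2 where z: "z1 \<in> icyl A (last vs)" "z2 \<in> icyl A v" "\<bar>g z1 - g z2\<bar> < e"
        using adj[OF lA vA wl e] by blast
      have "\<bar>g x - g z1\<bar> \<le> sum_list (map (Delta a) vs)"
        using snoc.IH[OF False _ _ w z(1)] snoc.prems(2,3) hd by simp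
      moreover have "\<bar>g z2 - g y\<bar> \<le> Delta a v" using osc[OF vA z(2)] snoc.prems(5) by simp
      ultimately show "\<bar>g x - g y\<bar> \<le> sum_list (map (Delta a) (vs @ [v])) + e"
        using z(3) by simp
    qed
  qed
qed

lemma chain_bound:
  assumes osc: "\<And>v z z'. set v \<subseteq> A \<Longrightarrow> z \<in> icyl A v \<Longrightarrow> z' \<in> icyl A v \<Longrightarrow> \<bar>g z - g z'\<bar> \<le> Delta a v"
  and adj: "\<And>u1 u2 e. set u1 \<subseteq> A \<Longrightarrow> set u2 \<subseteq> A \<Longrightarrow> wedge A u1 u2 \<noteq> {} \<Longrightarrow> e > 0 \<Longrightarrow>
              \<exists>z1\<in>icyl A u1. \<exists>z2\<in>icyl A u2. \<bar>g z1 - g z2\<bar> < e"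
  and "is_chain A x y vs"
  shows "\<bar>g x - g y\<bar> \<le> sum_list (map (Delta a) vs)"
  using chain_bound_aux[OF osc adj] assms(3) unfolding is_chain_def by blast

lemma Pt_osc': "set t \<subseteq> A \<Longrightarrow> z \<in> icyl A v \<Longrightarrow> z' \<in> icyl A v \<Longrightarrow> \<bar>Pt a t z - Pt a t z'\<bar> \<le> Delta a v"
proof -
  assume h: "set t \<subseteq> A" "z \<in> icyl A v" "z' \<in> icyl A v"
  have "set v \<subseteq> A" by (rule icyl_set[OF h(2)])
  then show ?thesis using Pt_osc[OF h(1)] h(2,3) by (simp add: icyl_iff)
qed

lemma Pt_adj1:
  assumes t: "set t \<subseteq> A" and w: "w \<in> wedge1 A u1 u2" and e: "0 < e"
  shows "\<exists>z1\<in>icyl A u1. \<exists>z2\<in>icyl A u2. \<bar>Pt a t z1 - Pt a t z2\<bar> < e"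
proof -
  obtain n where n: "n \<ge> Suc (max (length u1) (length u2))" "(1/2::real) ^ n < e"
    using half_pow_small[OF e] by blast
  have w1: "w \<in> icyl A u1" and w2: "\<forall>n > max (length u1) (length u2). \<exists>u \<in> fcyl A n u2. {pref w n, u} \<in> edges A n"
    using w by (auto simp: wedge1_def)
  have "max (length u1) (length u2) < n" using n(1) by (simp add: Suc_le_eq)
  then obtain u where u: "u \<in> fcyl A n u2" "{pref w n, u} \<in> edges A n" using w2 by blast
  obtain s j c where sjc: "c \<in> A - {1}" "set s \<subseteq> A" "{pref w n, u} = {s @ 1 # replicate j 2, s @ c # replicate j 1}"
    using edges_char[OF u(2)] by blast
  have wi: "w \<in> iwords A" using w1 by (simp add: icyl_iff)
  have lu: "length u = n" "take (length u2) u = u2" using u(1) by (auto simp: fcyl_def fwords_iff)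
  have l2: "length u2 < n" using n(1) by simp
  have uA: "set u \<subseteq> A" using u(1) by (auto simp: fcyl_def fwords_iff)
  have pset: "set (pref w n) \<subseteq> A" by (rule pref_set[OF wi])
  have eqP: "Pt a t (jL s) = Pt a t (jR s c)" using sjc(1) by (intro Pt_jL_jR) auto
  have dl: "Delta a (pref w n) < e"
    using Delta_le_pow[OF pset] n(2) by simp
  have inc2: "z \<in> icyl A u2" if "z \<in> iwords A" "\<forall>i<n. z i = u ! i" for z
  proof -
    have "\<forall>i<length u2. z i = u2 ! i"
    proof (intro allI impI)
      fix i assume i: "i < length u2"
      have "z i = u ! i" using that i l2 by simp
      also have "\<dots> = take (length u2) u ! i" using i by simp
      also have "\<dots> = u2 ! i" using lu by simp
      finally show "z i = u2 ! i" .
    qed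
    then show ?thesis using that by (simp add: icyl_iff)
  qed
  from sjc(3) consider "pref w n = s @ 1 # replicate j 2" "u = s @ c # replicate j 1"
    | "pref w n = s @ c # replicate j 1" "u = s @ 1 # replicate j 2"
    by (auto simp: doubleton_eq_iff)
  then show ?thesis
  proof cases
    case 1
    have "length (pref w n) = length (s @ 1 # replicate j 2)" using 1 by simp
    then have ln: "length s + 1 + j = n" by simp
    have X: "jL s \<in> icyl A (pref w n)" using jL_iwords[OF sjc(2)] jL_nth[of _ s j] 1 ln
      by (simp add: icyl_iff)
    have Y: "jR s c \<in> icyl A u2"
      by (rule inc2) (use jR_iwords[OF sjc(2)] sjc(1) jR_nth[of _ s j c] 1 ln in auto)
    have "\<bar>Pt a t w - Pt a t (jL s)\<bar> \<le> Delta a (pref w n)"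
      by (rule Pt_osc'[OF t pref_icyl[OF wi] X])
    then show ?thesis using w1 Y eqP dl by (intro bexI[of _ w] bexI[of _ "jR s c"]) auto
  next
    case 2
    have "length (pref w n) = length (s @ c # replicate j 1)" using 2 by simp
    then have ln: "length s + 1 + j = n" by simp
    have X: "jR s c \<in> icyl A (pref w n)" using jR_iwords[OF sjc(2)] sjc(1) jR_nth[of _ s j c] 2 ln
      by (simp add: icyl_iff)
    have Y: "jL s \<in> icyl A u2"
      by (rule inc2) (use jL_iwords[OF sjc(2)] jL_nth[of _ s j] 2 ln in auto)
    have "\<bar>Pt a t w - Pt a t (jR s c)\<bar> \<le> Delta a (pref w n)"
      by (rule Pt_osc'[OF t pref_icyl[OF wi] X])
    then show ?thesis using w1 Y eqP dl by (intro bexI[of _ w] bexI[of _ "jL s"]) auto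
  qed
qed

lemma Pt_adj:
  assumes t: "set t \<subseteq> A" and w: "wedge A u1 u2 \<noteq> {}" and e: "0 < e"
  shows "\<exists>z1\<in>icyl A u1. \<exists>z2\<in>icyl A u2. \<bar>Pt a t z1 - Pt a t z2\<bar> < e"
proof -
  obtain w0 where "w0 \<in> wedge1 A u1 u2 \<or> w0 \<in> wedge1 A u2 u1" using w by (auto simp: wedge_def)
  then show ?thesis
  proof
    assume "w0 \<in> wedge1 A u1 u2"
    then show ?thesis using Pt_adj1[OF t _ e] by blast
  next
    assume "w0 \<in> wedge1 A u2 u1"
    then obtain z1 z2 where "z1 \<in> icyl A u2" "z2 \<in> icyl A u1" "\<bar>Pt a t z1 - Pt a t z2\<bar> < e"
      using Pt_adj1[OF t _ e] by blast
    then show ?thesis by (intro bexI[of _ z2] bexI[of _ z1]) (auto simp: abs_minus_commute)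
  qed
qed

lemma Pt_chain: "set t \<subseteq> A \<Longrightarrow> is_chain A x y vs \<Longrightarrow> \<bar>Pt a t x - Pt a t y\<bar> \<le> sum_list (map (Delta a) vs)"
  by (rule chain_bound[OF Pt_osc' Pt_adj])

lemma chain_sum_nonneg: "is_chain A x y vs \<Longrightarrow> 0 \<le> sum_list (map (Delta a) vs)"
proof (intro sum_list_nonneg)
  fix r assume c: "is_chain A x y vs" and r: "r \<in> set (map (Delta a) vs)"
  then obtain v where v: "v \<in> set vs" "r = Delta a v" by auto
  then have "set v \<subseteq> A" using c allfwords_subset unfolding is_chain_def by blast
  then show "0 \<le> r" using v Delta_nonneg by simp
qed

lemma chain_Nil: "x \<in> iwords A \<Longrightarrow> y \<in> iwords A \<Longrightarrow> is_chain A x y [[]]"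
  by (auto simp: is_chain_def allfwords_iff)

lemma chain_single: "x \<in> icyl A v \<Longrightarrow> y \<in> icyl A v \<Longrightarrow> is_chain A x y [v]"
  by (auto simp: is_chain_def allfwords_iff dest: icyl_set)

lemma rho_bdd: "bdd_below {sum_list (map (Delta a) vs) | vs. is_chain A x y vs}"
  using chain_sum_nonneg by (auto intro!: bdd_belowI[of _ 0])

lemma rho_le: "is_chain A x y vs \<Longrightarrow> rho A a x y \<le> sum_list (map (Delta a) vs)"
  unfolding rho_def by (rule cInf_lower[OF _ rho_bdd]) blast

lemma rho_ge: assumes "x \<in> iwords A" "y \<in> iwords A"
    "\<And>vs. is_chain A x y vs \<Longrightarrow> c \<le> sum_list (map (Delta a) vs)"
  shows "c \<le> rho A a x y"
  unfolding rho_def by (rule cInf_greatest) (use assms chain_Nil in auto)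

lemma rho_nonneg: "x \<in> iwords A \<Longrightarrow> y \<in> iwords A \<Longrightarrow> 0 \<le> rho A a x y"
  by (rule rho_ge) (auto intro: chain_sum_nonneg)

lemma rho_cyl: "x \<in> icyl A v \<Longrightarrow> y \<in> icyl A v \<Longrightarrow> rho A a x y \<le> Delta a v"
  using rho_le[OF chain_single] by simp

lemma rho_Pt: "set t \<subseteq> A \<Longrightarrow> x \<in> iwords A \<Longrightarrow> y \<in> iwords A \<Longrightarrow> \<bar>Pt a t x - Pt a t y\<bar> \<le> rho A a x y"
  by (rule rho_ge) (auto intro: Pt_chain)

lemma rho_le1: "x \<in> iwords A \<Longrightarrow> y \<in> iwords A \<Longrightarrow> rho A a x y \<le> 1"
  using rho_cyl[of x "[]" y] by simp

lemma rho_small: assumes "x \<in> iwords A" "y \<in> iwords A" "\<And>n. rho A a x y \<le> (1/2) ^ n"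
  shows "rho A a x y = 0"
proof (rule ccontr)
  assume "rho A a x y \<noteq> 0"
  then have "0 < rho A a x y" using rho_nonneg[OF assms(1,2)] by simp
  then obtain n where "(1/2::real) ^ n < rho A a x y" using half_pow_small by blast
  then show False using assms(3)[of n] by simp
qed

lemma rho_self: "x \<in> iwords A \<Longrightarrow> rho A a x x = 0"
proof (rule rho_small)
  fix n assume x: "x \<in> iwords A"
  have "rho A a x x \<le> Delta a (pref x n)" using rho_cyl pref_icyl[OF x] by blast
  also have "\<dots> \<le> (1/2) ^ n" using Delta_le_pow[OF pref_set[OF x]] by simp
  finally show "rho A a x x \<le> (1/2) ^ n" .
qed

lemma chain_rev: "is_chain A x y vs \<Longrightarrow> is_chain A y x (rev vs)"
  unfolding is_chain_def
proof (elim conjE, intro conjI allI impI)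
  fix i assume h: "vs \<noteq> []" "\<forall>i. Suc i < length vs \<longrightarrow> wedge A (vs ! i) (vs ! Suc i) \<noteq> {}"
    "Suc i < length (rev vs)"
  define k where "k = length vs - Suc (Suc i)"
  have k: "Suc k < length vs" using h(3) by (simp add: k_def)
  have "rev vs ! i = vs ! Suc k" "rev vs ! Suc i = vs ! k"
    using h(3) by (auto simp: rev_nth k_def Suc_diff_Suc)
  then show "wedge A (rev vs ! i) (rev vs ! Suc i) \<noteq> {}"
    using h(2) k wedge_sym by metis
qed (auto simp: hd_rev last_rev)

lemma rho_sym: "rho A a x y = rho A a y x"
proof -
  have "{sum_list (map (Delta a) vs) | vs. is_chain A x y vs} = {sum_list (map (Delta a) vs) | vs. is_chain A y x vs}"
  proof -
    have *: "{sum_list (map (Delta a) vs) | vs. is_chain A x y vs} \<subseteq> {sum_list (map (Delta a) vs) | vs. is_chain A y x vs}"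
      for x y
    proof
      fix r assume "r \<in> {sum_list (map (Delta a) vs) | vs. is_chain A x y vs}"
      then obtain vs where "is_chain A x y vs" "r = sum_list (map (Delta a) vs)" by blast
      then show "r \<in> {sum_list (map (Delta a) vs) | vs. is_chain A y x vs}"
        using chain_rev by (intro CollectI exI[of _ "rev vs"]) (auto simp: rev_map[symmetric])
    qed
    show ?thesis using *[of x y] *[of y x] by blast
  qed
  then show ?thesis by (simp add: rho_def)
qed

lemma chain_append: "is_chain A x y vs \<Longrightarrow> is_chain A y z ws \<Longrightarrow> is_chain A x z (vs @ ws)"
  unfolding is_chain_def
proof (elim conjE, intro conjI allI impI)
  fix i assume h: "vs \<noteq> []" "ws \<noteq> []" "y \<in> icyl A (last vs)" "y \<in> icyl A (hd ws)"
    "\<forall>i. Suc i < length vs \<longrightarrow> wedge A (vs ! i) (vs ! Suc i) \<noteq> {}"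
    "\<forall>i. Suc i < length ws \<longrightarrow> wedge A (ws ! i) (ws ! Suc i) \<noteq> {}"
    "Suc i < length (vs @ ws)"
  consider "Suc i < length vs" | "Suc i = length vs" | "length vs < Suc i" by linarith
  then show "wedge A ((vs @ ws) ! i) ((vs @ ws) ! Suc i) \<noteq> {}"
  proof cases
    case 1
    then show ?thesis using h(5) by (simp add: nth_append)
  next
    case 2
    have i: "i = length vs - 1" using 2 by simp
    have "(vs @ ws) ! i = last vs" using 2 h(1) by (simp add: nth_append last_conv_nth i)
    moreover have "(vs @ ws) ! Suc i = hd ws" using 2 h(2) by (simp add: nth_append hd_conv_nth)
    ultimately show ?thesis using wedge_nonempty[OF h(3,4)] by simp
  next
    case 3
    define k where "k = i - length vs"
    have "(vs @ ws) ! i = ws ! k" "(vs @ ws) ! Suc i = ws ! Suc k" "Suc k < length ws"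
      using 3 h(7) by (auto simp: nth_append k_def Suc_diff_le)
    then show ?thesis using h(6) by simp
  qed
qed auto

lemma rho_triangle: assumes "x \<in> iwords A" "y \<in> iwords A" "z \<in> iwords A"
  shows "rho A a x z \<le> rho A a x y + rho A a y z"
proof (rule field_le_epsilon)
  fix e :: real assume e: "0 < e"
  have ne: "{sum_list (map (Delta a) vs) | vs. is_chain A p q vs} \<noteq> {}" if "p \<in> iwords A" "q \<in> iwords A" for p q
    using chain_Nil[OF that] by blast
  obtain s1 where s1: "s1 \<in> {sum_list (map (Delta a) vs) | vs. is_chain A x y vs}" "s1 < rho A a x y + e/2"
    using cInf_lessD[OF ne[OF assms(1,2)], of "rho A a x y + e/2"] e unfolding rho_def by auto
  obtain s2 where s2: "s2 \<in> {sum_list (map (Delta a) vs) | vs. is_chain A y z vs}" "s2 < rho A a y z + e/2"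
    using cInf_lessD[OF ne[OF assms(2,3)], of "rho A a y z + e/2"] e unfolding rho_def by auto
  obtain vs ws where vw: "is_chain A x y vs" "s1 = sum_list (map (Delta a) vs)"
     "is_chain A y z ws" "s2 = sum_list (map (Delta a) ws)" using s1(1) s2(1) by blast
  have "rho A a x z \<le> sum_list (map (Delta a) (vs @ ws))" by (rule rho_le[OF chain_append[OF vw(1,3)]])
  also have "\<dots> = s1 + s2" using vw by simp
  finally show "rho A a x z \<le> rho A a x y + rho A a y z + e" using s1 s2 by simp
qed

end


declare cst_apply[simp del]

lemma H_small: "H z < (1/2) ^ j \<Longrightarrow> \<forall>i<j. z i = 1"
proof (induction j arbitrary: z)
  case 0
  then show ?case by simp
next
  case (Suc j)
  have h0: "0 \<le> H (stl z)" by (rule H_nonneg)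
  have "z 0 = 1"
  proof (rule ccontr)
    assume "z 0 \<noteq> 1"
    then have "H z \<ge> 1/2" using h0 by (subst H_rec) auto
    moreover have "(1/2::real) ^ Suc j \<le> 1/2" by (simp add: power_le_one)
    ultimately show False using Suc.prems by linarith
  qed
  then have "H (stl z) < (1/2) ^ j" using Suc.prems by (subst (asm) H_rec) simp
  then have "\<forall>i<j. stl z i = 1" by (rule Suc.IH)
  then show ?case using \<open>z 0 = 1\<close> by (auto simp: stl_def less_Suc_eq_0_disj)
qed

lemma H_big: "H z > 1 - (1/2) ^ j \<Longrightarrow> \<forall>i<j. z i = 2"
proof (induction j arbitrary: z)
  case 0
  then show ?case by simp
next
  case (Suc j)
  have h0: "H (stl z) \<le> 1" by (rule H_le1)
  have "z 0 = 2"
  proof (rule ccontr)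
    assume "z 0 \<noteq> 2"
    then have "H z \<le> 1/2" using h0 by (subst H_rec) auto
    moreover have "(1/2::real) ^ Suc j \<le> 1/2" by (simp add: power_le_one)
    ultimately show False using Suc.prems by linarith
  qed
  then have "H (stl z) > 1 - (1/2) ^ j" using Suc.prems by (subst (asm) H_rec) simp
  then have "\<forall>i<j. stl z i = 2" by (rule Suc.IH)
  then show ?case using \<open>z 0 = 2\<close> by (auto simp: stl_def less_Suc_eq_0_disj)
qed

lemma list_decomp_last: "(\<forall>x\<in>set u. x = e) \<or> (\<exists>t c i. c \<noteq> e \<and> u = t @ c # replicate i e)"
proof (induction u rule: rev_induct)
  case Nil
  then show ?case by simp
next
  case (snoc x u)
  show ?case
  proof (cases "x = e")
    case False
    then show ?thesis by (intro disjI2 exI[of _ u] exI[of _ x] exI[of _ 0]) simp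
  next
    case True
    from snoc show ?thesis
    proof
      assume "\<forall>x\<in>set u. x = e"
      then show ?thesis using True by simp
    next
      assume "\<exists>t c i. c \<noteq> e \<and> u = t @ c # replicate i e"
      then obtain t c i where "c \<noteq> e" "u = t @ c # replicate i e" by blast
      then show ?thesis using True
        by (intro disjI2 exI[of _ t] exI[of _ c] exI[of _ "Suc i"]) (simp add: replicate_append_same)
    qed
  qed
qed

lemma all_eq_replicate: "\<forall>x\<in>set u. x = e \<Longrightarrow> u = replicate (length u) e"
  by (simp add: list_eq_iff_nth_eq)

lemma jL_conc: "jL t = conc (t @ [1]) (cst 2)" by (simp add: jL_def conc_append)
lemma jR_conc: "jR t c = conc (t @ [c]) (cst 1)" by (simp add: jR_def conc_append)

lemma conc_prefix: "i < length u \<Longrightarrow> conc u f i = u ! i" by simp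

definition bsel :: "(nat \<Rightarrow> real) \<Rightarrow> nat list \<Rightarrow> real \<Rightarrow> nat" where
  "bsel a q r = (LEAST b. Delta a q * (1/2) ^ b \<le> 2 * r)"

definition cellE :: "(nat \<Rightarrow> real) \<Rightarrow> nat list \<Rightarrow> nat \<Rightarrow> real \<Rightarrow> nat list" where
  "cellE a q e r = q @ replicate (bsel a q r) e"

definition VJ :: "nat set \<Rightarrow> (nat \<Rightarrow> real) \<Rightarrow> nat list \<Rightarrow> real \<Rightarrow> nat list set" where
  "VJ A a t r = (\<lambda>c. if c = 1 then cellE a (t @ [1]) 2 r else cellE a (t @ [c]) 1 r) ` A"

context wset
begin

lemma conc_iwords: "set u \<subseteq> A \<Longrightarrow> f \<in> iwords A \<Longrightarrow> conc u f \<in> iwords A"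
  by (auto simp: iwords_iff conc_def dest: nth_mem)

lemma cst_iwords: "c \<in> A \<Longrightarrow> cst c \<in> iwords A" by (simp add: iwords_iff cst_apply)

lemma conc_icyl: "set (u @ v) \<subseteq> A \<Longrightarrow> f \<in> iwords A \<Longrightarrow> conc u (conc v f) \<in> icyl A (u @ v)"
  by (auto simp: icyl_iff conc_append[symmetric] intro!: conc_iwords)

lemma pref_jL: "length s < N \<Longrightarrow> pref (jL s) N = s @ 1 # replicate (N - length s - 1) 2"
proof -
  assume N: "length s < N"
  have l: "length s + 1 + (N - length s - 1) = N" using N by simp
  show ?thesis unfolding pref_eq_iff
  proof (intro conjI allI impI)
    show "length (s @ 1 # replicate (N - length s - 1) 2) = N" using l by simp
    fix i assume "i < N"
    then show "jL s i = (s @ 1 # replicate (N - length s - 1) 2) ! i" using jL_nth[of i s "N - length s - 1"] l by simp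
  qed
qed

lemma rho_ident: assumes s: "set s \<subseteq> A" and c: "c \<in> A" "c \<noteq> 1"
  shows "rho A a (jL s) (jR s c) = 0"
proof (rule rho_small)
  show xi: "jL s \<in> iwords A" by (rule jL_iwords[OF s])
  show yi: "jR s c \<in> iwords A" by (rule jR_iwords[OF s c(1)])
  fix n
  define v1 where "v1 = s @ 1 # replicate n 2"
  define v2 where "v2 = s @ c # replicate n 1"
  have v1A: "set v1 \<subseteq> A" using s A1 A2 by (auto simp: v1_def)
  have v2A: "set v2 \<subseteq> A" using s A1 c by (auto simp: v2_def)
  have x1: "jL s \<in> icyl A v1" using xi jL_nth[of _ s n] by (simp add: icyl_iff v1_def)
  have y2: "jR s c \<in> icyl A v2" using yi jR_nth[of _ s n c] by (simp add: icyl_iff v2_def)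
  have "jL s \<in> wedge1 A v1 v2"
    unfolding wedge1_def
  proof (intro CollectI conjI allI impI)
    show "jL s \<in> icyl A v1" by (rule x1)
    fix N assume N: "max (length v1) (length v2) < N"
    define j where "j = N - length s - 1"
    have Nj: "length s + 1 + j = N" using N by (simp add: j_def v1_def)
    have pj: "pref (jL s) N = s @ 1 # replicate j 2" using N by (simp add: pref_jL j_def v1_def)
    have e: "{s @ 1 # replicate j 2, s @ c # replicate j 1} \<in> edges A N"
      using edges_intro[of c A s j] s c Nj by simp
    have "s @ c # replicate j 1 \<in> fcyl A N v2"
    proof -
      have "length v1 < N" using N by simp
      then have "n \<le> j" by (simp add: j_def v1_def)
      then have "replicate j (1::nat) = replicate n 1 @ replicate (j - n) 1" by (simp add: replicate_add[symmetric])
      then have "take (length v2) (s @ c # replicate j 1) = v2" by (simp add: v2_def)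
      moreover have "set (s @ c # replicate j 1) \<subseteq> A" using s c A1 by auto
      ultimately show ?thesis using Nj by (simp add: fcyl_def fwords_iff)
    qed
    then show "\<exists>u\<in>fcyl A N v2. {pref (jL s) N, u} \<in> edges A N"
      using e pj by (intro bexI[of _ "s @ c # replicate j 1"]) simp_all
  qed
  then have w: "wedge A v1 v2 \<noteq> {}" by (auto simp: wedge_def)
  have ch: "is_chain A (jL s) (jR s c) [v1, v2]"
    using v1A v2A x1 y2 w by (auto simp: is_chain_def allfwords_iff less_Suc_eq)
  have "rho A a (jL s) (jR s c) \<le> Delta a v1 + Delta a v2" using rho_le[OF ch] by simp
  also have "\<dots> = Delta a s * (1/2) * (1/2) ^ n + Delta a s * a c * (1/2) ^ n"
    by (simp add: v1_def v2_def Delta_append Delta_rep)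
  also have "\<dots> \<le> Delta a s * (1/2) * (1/2) ^ n + Delta a s * (1/2) * (1/2) ^ n"
    using a_le[OF c(1)] Delta_nonneg[OF s] by (intro add_left_mono mult_right_mono mult_left_mono) auto
  also have "\<dots> = Delta a s * (1/2) ^ n" by simp
  also have "\<dots> \<le> 1 * (1/2) ^ n" using Delta_le1[OF s] by (intro mult_right_mono) auto
  finally show "rho A a (jL s) (jR s c) \<le> (1/2) ^ n" by simp
qed

lemma core_sep:
  assumes y: "y \<in> iwords A" and w: "set w \<subseteq> A" and pre: "\<forall>i<length w. y i = w ! i"
    and ne: "y (length w) \<noteq> e" and e: "e \<in> {1, 2}"
  shows "Delta a w / 2 \<le> rho A a y (conc w (cst e))"
proof -
  have eA: "e \<in> A" using e A1 A2 by auto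
  have zi: "conc w (cst e) \<in> iwords A" by (rule conc_iwords[OF w cst_iwords[OF eA]])
  have "\<bar>Pt a w y - Pt a w (conc w (cst e))\<bar> \<le> rho A a y (conc w (cst e))"
    by (rule rho_Pt[OF w y zi])
  moreover have "Pt a w y = Delta a w * H (shiftw (length w) y)"
    using Pt_conc[of a w "shiftw (length w) y"] conc_shiftw[OF pre] by simp
  moreover have "Pt a w (conc w (cst e)) = Delta a w * H (cst e)" by (rule Pt_conc)
  moreover have "\<bar>H (shiftw (length w) y) - H (cst e)\<bar> \<ge> 1/2"
  proof -
    have s0: "shiftw (length w) y 0 \<noteq> e" using ne by (simp add: shiftw_def)
    have "0 \<le> H (stl (shiftw (length w) y))" "H (stl (shiftw (length w) y)) \<le> 1"
      by (rule H_nonneg, rule H_le1)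
    then show ?thesis using e s0 by (subst H_rec) (auto simp: H_cst1 H_cst2)
  qed
  moreover have "0 \<le> Delta a w" by (rule Delta_nonneg[OF w])
  moreover have "\<bar>Delta a w * H (shiftw (length w) y) - Delta a w * H (cst e)\<bar>
      = Delta a w * \<bar>H (shiftw (length w) y) - H (cst e)\<bar>"
    using \<open>0 \<le> Delta a w\<close> by (simp add: abs_mult right_diff_distrib[symmetric])
  moreover have "Delta a w * (1/2) \<le> Delta a w * \<bar>H (shiftw (length w) y) - H (cst e)\<bar>"
    using calculation(4,5) by (intro mult_left_mono) auto
  ultimately show ?thesis by simp
qed

lemma end_sep:
  assumes y: "y \<in> iwords A" and q: "set q \<subseteq> A" and pre: "\<forall>i<length q. y i = q ! i"
    and npre: "\<not> (\<forall>i<length q + b. y i = (q @ replicate b e) ! i)" and e: "e \<in> {1, 2}"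
  shows "Delta a q * (1/2) ^ b \<le> rho A a y (conc q (cst e))"
  using npre
proof (induction b)
  case 0
  then show ?case using pre by simp
next
  case (Suc b)
  have eA: "e \<in> A" using e A1 A2 by auto
  show ?case
  proof (cases "\<forall>i<length q + b. y i = (q @ replicate b e) ! i")
    case True
    define w where "w = q @ replicate b e"
    have wA: "set w \<subseteq> A" using q eA by (auto simp: w_def)
    have ne: "y (length w) \<noteq> e"
    proof
      assume "y (length w) = e"
      have qw: "q @ replicate (Suc b) e = w @ [e]"
        by (simp add: w_def replicate_append_same)
      have lw: "length w = length q + b" by (simp add: w_def)
      have "\<forall>i<length w + 1. y i = (w @ [e]) ! i"
        using True \<open>y (length w) = e\<close> lw by (auto simp: nth_append less_Suc_eq w_def)
      then have "\<forall>i<length q + Suc b. y i = (q @ replicate (Suc b) e) ! i"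
        using qw lw by simp
      then show False using Suc.prems by simp
    qed
    have "Delta a w / 2 \<le> rho A a y (conc w (cst e))"
      by (rule core_sep[OF y wA _ ne e]) (use True in \<open>simp add: w_def\<close>)
    moreover have "conc w (cst e) = conc q (cst e)" by (simp add: w_def conc_append conc_replicate_cst)
    moreover have "Delta a w / 2 = Delta a q * (1/2) ^ Suc b"
      using e by (simp add: w_def Delta_append Delta_rep)
    ultimately show ?thesis by simp
  next
    case False
    then have "Delta a q * (1/2) ^ b \<le> rho A a y (conc q (cst e))" by (rule Suc.IH)
    moreover have "Delta a q * (1/2) ^ Suc b \<le> Delta a q * (1/2) ^ b"
      using Delta_nonneg[OF q] by (intro mult_left_mono) (auto simp: power_decreasing)
    ultimately show ?thesis by linarith
  qed
qed

lemma bsel_prop: assumes q: "set q \<subseteq> A" and r: "0 < r"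
  shows "Delta a q * (1/2) ^ bsel a q r \<le> 2 * r"
    and "bsel a q r > 0 \<Longrightarrow> r < Delta a q * (1/2) ^ bsel a q r"
proof -
  obtain n where n: "(1/2::real) ^ n < 2 * r" using half_pow_small[of "2*r" 0] r by auto
  have "Delta a q * (1/2) ^ n \<le> 1 * (1/2) ^ n" using Delta_le1[OF q] by (intro mult_right_mono) auto
  then have ex: "Delta a q * (1/2) ^ n \<le> 2 * r" using n by linarith
  show "Delta a q * (1/2) ^ bsel a q r \<le> 2 * r" unfolding bsel_def
    by (rule LeastI[where P="\<lambda>b. Delta a q * (1/2) ^ b \<le> 2 * r", OF ex])
  assume b0: "bsel a q r > 0"
  then obtain b' where b': "bsel a q r = Suc b'" by (cases "bsel a q r") auto
  have "\<not> Delta a q * (1/2) ^ b' \<le> 2 * r"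
  proof
    assume "Delta a q * (1/2) ^ b' \<le> 2 * r"
    then have "bsel a q r \<le> b'" unfolding bsel_def by (rule Least_le)
    then show False using b' by simp
  qed
  then show "r < Delta a q * (1/2) ^ bsel a q r" using b' by simp
qed

lemma cellE_prop: assumes q: "set q \<subseteq> A" and r: "0 < r" and e: "e \<in> {1, 2}"
  shows "Delta a (cellE a q e r) \<le> 2 * r" "set (cellE a q e r) \<subseteq> A"
    and "y \<in> icyl A q \<Longrightarrow> rho A a y (conc q (cst e)) < r \<Longrightarrow> y \<in> icyl A (cellE a q e r)"
proof -
  show "Delta a (cellE a q e r) \<le> 2 * r"
    using bsel_prop(1)[OF q r] e by (simp add: cellE_def Delta_append Delta_rep)
  show "set (cellE a q e r) \<subseteq> A" using q e A1 A2 by (auto simp: cellE_def)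
  assume y: "y \<in> icyl A q" and ry: "rho A a y (conc q (cst e)) < r"
  have yi: "y \<in> iwords A" and pre: "\<forall>i<length q. y i = q ! i" using y by (auto simp: icyl_iff)
  show "y \<in> icyl A (cellE a q e r)"
  proof (rule ccontr)
    assume "y \<notin> icyl A (cellE a q e r)"
    then have np: "\<not> (\<forall>i<length q + bsel a q r. y i = (q @ replicate (bsel a q r) e) ! i)"
      using yi by (simp add: icyl_iff cellE_def)
    have b: "Delta a q * (1/2) ^ bsel a q r \<le> rho A a y (conc q (cst e))"
      by (rule end_sep[OF yi q pre np e])
    show False
    proof (cases "bsel a q r > 0")
      case True
      then show False using bsel_prop(2)[OF q r] b ry by linarith
    next
      case False
      then show False using np pre by simp
    qed
  qed
qed

lemma Pt_jL_self: "Pt a t (jL t) = Delta a t / 2"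
  by (simp add: jL_def Pt_conc H_Cons H_cst2)

lemma junction:
  assumes t: "set t \<subseteq> A" and r: "0 < r" and big: "2 * r \<le> Delta a t"
    and y: "y \<in> iwords A" and ry: "rho A a y (jL t) < r"
  shows "\<exists>v\<in>VJ A a t r. y \<in> icyl A v"
proof -
  have ji: "jL t \<in> iwords A" by (rule jL_iwords[OF t])
  have pre: "\<forall>i<length t. y i = t ! i"
  proof (rule ccontr)
    assume np: "\<not> (\<forall>i<length t. y i = t ! i)"
    have "\<bar>Pt a t y - Pt a t (jL t)\<bar> \<le> rho A a y (jL t)" by (rule rho_Pt[OF t y ji])
    moreover have "Pt a t y = 0 \<or> Pt a t y = Delta a t" by (rule Pt_out[OF np])
    ultimately show False using Pt_jL_self[of t] big ry by auto
  qed
  define c where "c = y (length t)"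
  have cA: "c \<in> A" using y by (simp add: c_def iwords_iff)
  have yc: "y \<in> icyl A (t @ [c])" using y pre by (auto simp: icyl_iff c_def nth_append less_Suc_eq)
  show ?thesis
  proof (cases "c = 1")
    case True
    have "y \<in> icyl A (cellE a (t @ [1]) 2 r)"
      by (rule cellE_prop(3)) (use t A1 r yc True ry in \<open>auto simp: jL_conc\<close>)
    then show ?thesis using True cA by (auto simp: VJ_def)
  next
    case False
    have ri: "jR t c \<in> iwords A" by (rule jR_iwords[OF t cA])
    have "rho A a y (jR t c) \<le> rho A a y (jL t) + rho A a (jL t) (jR t c)"
      by (rule rho_triangle[OF y ji ri])
    also have "rho A a (jL t) (jR t c) = 0" by (rule rho_ident[OF t cA False])
    finally have "rho A a y (jR t c) < r" using ry by simp
    then have "y \<in> icyl A (cellE a (t @ [c]) 1 r)"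
      by (intro cellE_prop(3)) (use t cA r yc in \<open>auto simp: jR_conc\<close>)
    then show ?thesis using False cA by (auto simp: VJ_def)
  qed
qed

lemma VJ_prop: assumes t: "set t \<subseteq> A" and r: "0 < r"
  shows "\<forall>v\<in>VJ A a t r. Delta a v \<le> 2 * r \<and> set v \<subseteq> A"
  using cellE_prop(1,2)[OF _ r] t A1 by (auto simp: VJ_def)

end


declare cst_apply[simp del]

lemma conc_Cons_rep_cst: "conc (c # replicate i e) (cst e) = conc [c] (cst e)"
  using conc_append[of "[c]" "replicate i e" "cst e"] by (simp add: conc_replicate_cst)

context wset
begin

lemma Delta_prefix_le: "set (u @ v) \<subseteq> A \<Longrightarrow> Delta a (u @ v) \<le> Delta a u"
proof -
  assume h: "set (u @ v) \<subseteq> A"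
  have "Delta a (u @ v) = Delta a u * Delta a v" by (rule Delta_append)
  also have "\<dots> \<le> Delta a u * 1"
    using h Delta_nonneg[of u] Delta_le1[of v] by (intro mult_left_mono) auto
  finally show ?thesis by simp
qed

lemma near_end:
  assumes u: "set u \<subseteq> A" and xu: "x \<in> icyl A u" and big: "8 * r \<le> Delta a u" and r: "0 < r"
    and y: "y \<in> iwords A" and rxy: "rho A a x y < r" and e: "e \<in> {1, 2}"
    and Py: "Pt a u y = (if e = 1 then 0 else Delta a u)"
  shows "rho A a y (conc u (cst e)) < 3 * r"
proof -
  have xi: "x \<in> iwords A" and pre: "\<forall>i<length u. x i = u ! i" using xu by (auto simp: icyl_iff)
  define x' where "x' = shiftw (length u) x"
  have xc: "x = conc u x'" using conc_shiftw[OF pre] by (simp add: x'_def)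
  have Px: "Pt a u x = Delta a u * H x'" using Pt_conc[of a u x'] xc by simp
  have d: "\<bar>Pt a u x - Pt a u y\<bar> < r" using rho_Pt[OF u xi y] rxy by linarith
  define j where "j = bsel a u r"
  have Dpos: "0 < Delta a u" using big r by linarith
  have j0: "j > 0"
  proof (rule ccontr)
    assume "\<not> 0 < j"
    then have "Delta a u \<le> 2 * r" using bsel_prop(1)[OF u r] by (simp add: j_def)
    then show False using big r by linarith
  qed
  have jlt: "r < Delta a u * (1/2) ^ j" using bsel_prop(2)[OF u r] j0 by (simp add: j_def)
  have jle: "Delta a u * (1/2) ^ j \<le> 2 * r" using bsel_prop(1)[OF u r] by (simp add: j_def)
  have eA: "e \<in> A" using e A1 A2 by auto
  have x'e: "\<forall>i<j. x' i = e"
  proof (cases "e = 1")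
    case True
    then have "Delta a u * H x' < r" using d Px Py by simp
    then have "Delta a u * H x' < Delta a u * (1/2) ^ j" using jlt by linarith
    then have "H x' < (1/2) ^ j" using Dpos by simp
    then show ?thesis using H_small True by blast
  next
    case False
    then have e2: "e = 2" using e by simp
    then have "Delta a u - Delta a u * H x' < r" using d Px Py by simp
    then have "Delta a u * (1 - (1/2) ^ j) < Delta a u * H x'" using jlt by (simp add: algebra_simps)
    then have "1 - (1/2) ^ j < H x'" using Dpos by simp
    then show ?thesis using H_big e2 by blast
  qed
  define w where "w = u @ replicate j e"
  have wA: "set w \<subseteq> A" using u eA by (auto simp: w_def)
  have xw: "x \<in> icyl A w"
    using xi x'e by (auto simp: icyl_iff w_def xc nth_append conc_def)
  have zw: "conc u (cst e) \<in> icyl A w"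
  proof -
    have "conc u (cst e) = conc u (conc (replicate j e) (cst e))" by (simp add: conc_replicate_cst)
    then show ?thesis using conc_icyl[of u "replicate j e" "cst e"] wA cst_iwords[OF eA] by (simp add: w_def)
  qed
  have zi: "conc u (cst e) \<in> iwords A" using zw by (simp add: icyl_iff)
  have "rho A a x (conc u (cst e)) \<le> Delta a w" by (rule rho_cyl[OF xw zw])
  also have "Delta a w = Delta a u * (1/2) ^ j" using e by (simp add: w_def Delta_append Delta_rep)
  finally have r2: "rho A a x (conc u (cst e)) \<le> 2 * r" using jle by linarith
  have "rho A a y (conc u (cst e)) \<le> rho A a y x + rho A a x (conc u (cst e))"
    by (rule rho_triangle[OF y xi zi])
  then show ?thesis using r2 rxy rho_sym[of x y] by linarith
qed

lemma far_all:
  assumes e: "e \<in> {1, 2}" and u: "u = replicate k e" and y: "y \<in> iwords A" and yu: "y \<notin> icyl A u"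
    and big: "8 * r \<le> Delta a u" and r: "0 < r" and near: "rho A a y (conc u (cst e)) < 3 * r"
  shows False
proof -
  have np: "\<not> (\<forall>i<length [] + k. y i = ([] @ replicate k e) ! i)" using yu y u by (simp add: icyl_iff)
  have "Delta a [] * (1/2) ^ k \<le> rho A a y (conc [] (cst e))"
    by (rule end_sep[OF y _ _ np e]) auto
  moreover have "conc u (cst e) = cst e" by (simp add: u conc_replicate_cst)
  moreover have "Delta a u = (1/2) ^ k" using e u Delta_rep by simp
  ultimately show False using big near r by simp
qed

lemma far_dec1:
  assumes t: "set (t @ c # replicate i 1) \<subseteq> A" and c: "c \<noteq> 1" and u: "u = t @ c # replicate i 1"
    and y: "y \<in> iwords A" and big: "8 * r \<le> Delta a u" and r: "0 < r"
    and near: "rho A a y (conc u (cst 1)) < 3 * r"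
  shows "\<exists>v\<in>VJ A a t (3 * r). y \<in> icyl A v"
proof -
  have tA: "set t \<subseteq> A" and cA: "c \<in> A" using t by auto
  have "conc u (cst 1) = jR t c" by (simp only: u jR_def conc_append conc_Cons_rep_cst)
  then have n1: "rho A a y (jR t c) < 3 * r" using near by simp
  have ji: "jL t \<in> iwords A" by (rule jL_iwords[OF tA])
  have ri: "jR t c \<in> iwords A" by (rule jR_iwords[OF tA cA])
  have "rho A a y (jL t) \<le> rho A a y (jR t c) + rho A a (jR t c) (jL t)" by (rule rho_triangle[OF y ri ji])
  also have "rho A a (jR t c) (jL t) = 0" using rho_ident[OF tA cA c] rho_sym by metis
  finally have n2: "rho A a y (jL t) < 3 * r" using n1 by simp
  have "Delta a u \<le> Delta a t" using Delta_prefix_le[of t "c # replicate i 1"] t u by simp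
  then have "2 * (3 * r) \<le> Delta a t" using big r by linarith
  then show ?thesis using junction[OF tA _ _ y n2] r by simp
qed

lemma far_dec2_1:
  assumes t: "set (t @ 1 # replicate i 2) \<subseteq> A" and u: "u = t @ 1 # replicate i 2"
    and y: "y \<in> iwords A" and big: "8 * r \<le> Delta a u" and r: "0 < r"
    and near: "rho A a y (conc u (cst 2)) < 3 * r"
  shows "\<exists>v\<in>VJ A a t (3 * r). y \<in> icyl A v"
proof -
  have tA: "set t \<subseteq> A" using t by auto
  have "conc u (cst 2) = jL t" by (simp only: u jL_def conc_append conc_Cons_rep_cst)
  then have n2: "rho A a y (jL t) < 3 * r" using near by simp
  have "Delta a u \<le> Delta a t" using Delta_prefix_le[of t "1 # replicate i 2"] t u by simp
  then have "2 * (3 * r) \<le> Delta a t" using big r by linarith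
  then show ?thesis using junction[OF tA _ _ y n2] r by simp
qed

lemma far_dec2_c:
  assumes t: "set (t @ c # replicate i 2) \<subseteq> A" and c: "c \<notin> {1, 2}" and u: "u = t @ c # replicate i 2"
    and y: "y \<in> iwords A" and yu: "y \<notin> icyl A u" and big: "8 * r \<le> Delta a u" and r: "0 < r"
    and near: "rho A a y (conc u (cst 2)) < 3 * r"
  shows False
proof -
  define q where "q = t @ [c]"
  have qA: "set q \<subseteq> A" using t by (auto simp: q_def)
  have uq: "u = q @ replicate i 2" by (simp add: u q_def)
  have Z: "conc u (cst 2) = conc q (cst 2)" by (simp add: uq conc_append conc_replicate_cst)
  have Dq: "Delta a u \<le> Delta a q" using Delta_prefix_le[of q "replicate i 2"] t uq by (simp add: q_def)
  have zi: "conc q (cst 2) \<in> iwords A" using conc_iwords[OF qA cst_iwords[OF A2]] .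
  show False
  proof (cases "\<forall>i<length q. y i = q ! i")
    case True
    have np: "\<not> (\<forall>j<length q + i. y j = (q @ replicate i 2) ! j)" using yu y uq by (simp add: icyl_iff)
    have "Delta a q * (1/2) ^ i \<le> rho A a y (conc q (cst 2))"
      by (rule end_sep[OF y qA True np]) simp
    moreover have "Delta a u = Delta a q * (1/2) ^ i" by (simp add: uq Delta_append Delta_rep)
    ultimately show False using big near Z r by simp
  next
    case False
    then have "\<not> (\<forall>j<Suc (length t). y j = (t @ [c]) ! j)" by (simp add: q_def)
    then have P0: "Pt a q y = 0" using Pt_out0[OF c] by (simp add: q_def)
    have P1: "Pt a q (conc q (cst 2)) = Delta a q" by (simp add: Pt_conc H_cst2)
    have "\<bar>Pt a q y - Pt a q (conc q (cst 2))\<bar> \<le> rho A a y (conc q (cst 2))" by (rule rho_Pt[OF qA y zi])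
    then have "Delta a q \<le> rho A a y (conc q (cst 2))" using P0 P1 Delta_nonneg[OF qA] by simp
    then show False using Dq big near Z r by simp
  qed
qed


lemma ball_cover:
  assumes fin: "finite A" and am: "0 < amin" "amin \<le> 1" "\<forall>c\<in>A. amin \<le> a c"
    and x: "x \<in> iwords A" and r: "0 < r"
  shows "\<exists>V. finite V \<and> card V \<le> 2 * card A + 1 \<and> (\<forall>v\<in>V. set v \<subseteq> A \<and> Delta a v \<le> 8 * r / amin)
          \<and> {y \<in> iwords A. rho A a x y < r} \<subseteq> (\<Union>v\<in>V. icyl A v)"
proof (cases "1 < 8 * r")
  case True
  have "1 \<le> 8 * r / amin"
  proof -
    have "8 * r \<le> 8 * r / amin" using am r by (simp add: le_divide_eq mult_le_cancel_left1)
    then show ?thesis using True by linarith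
  qed
  then show ?thesis by (intro exI[of _ "{[]}"]) auto
next
  case False
  define S where "S = {k. 8 * r \<le> Delta a (pref x k)}"
  obtain N where N: "(1/2::real) ^ N < 8 * r" using half_pow_small[of "8*r" 0] r by auto
  have SN: "S \<subseteq> {..<N}"
  proof
    fix k assume k: "k \<in> S"
    show "k \<in> {..<N}"
    proof (rule ccontr)
      assume "k \<notin> {..<N}"
      then have "(1/2::real) ^ k \<le> (1/2) ^ N" by (intro power_decreasing) auto
      moreover have "Delta a (pref x k) \<le> (1/2) ^ k" using Delta_le_pow[OF pref_set[OF x]] by simp
      ultimately have "Delta a (pref x k) < 8 * r" using N by linarith
      then show False using k by (simp add: S_def)
    qed
  qed
  have finS: "finite S" using SN finite_subset by blast
  have S0: "0 \<in> S" using False by (simp add: S_def pref_def)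
  define k where "k = Max S"
  have kS: "k \<in> S" unfolding k_def by (rule Max_in[OF finS]) (use S0 in auto)
  have kS1: "Suc k \<notin> S" using finS k_def by (metis Max_ge Suc_n_not_le_n)
  define u where "u = pref x k"
  have uA: "set u \<subseteq> A" by (simp add: u_def pref_set[OF x])
  have xu: "x \<in> icyl A u" by (simp add: u_def pref_icyl[OF x])
  have big: "8 * r \<le> Delta a u" using kS by (simp add: S_def u_def)
  have small: "Delta a u \<le> 8 * r / amin"
  proof -
    have "pref x (Suc k) = u @ [x k]" by (simp add: u_def pref_def)
    then have "Delta a (pref x (Suc k)) = Delta a u * a (x k)" by (simp add: Delta_append)
    then have lt: "Delta a u * a (x k) < 8 * r" using kS1 by (simp add: S_def)
    have "amin \<le> a (x k)" using am x by (simp add: iwords_iff)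
    then have "Delta a u * amin \<le> Delta a u * a (x k)" using Delta_nonneg[OF uA] by (rule mult_left_mono)
    then have "Delta a u * amin \<le> 8 * r" using lt by linarith
    then show ?thesis using am by (simp add: le_divide_eq)
  qed
  have VJb: "\<forall>v\<in>VJ A a t (3 * r). set v \<subseteq> A \<and> Delta a v \<le> 8 * r / amin" if "set t \<subseteq> A" for t
  proof -
    have "6 * r \<le> 8 * r / amin"
    proof -
      have "8 * r \<le> 8 * r / amin" using am r by (simp add: le_divide_eq mult_le_cancel_left1)
      then show ?thesis using r by linarith
    qed
    then show ?thesis using VJ_prop[OF that, of "3 * r"] r by force
  qed
  have VJc: "finite (VJ A a t (3 * r)) \<and> card (VJ A a t (3 * r)) \<le> card A" for t
    unfolding VJ_def using fin by (intro conjI finite_imageI card_image_le)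
  \<comment> \<open>the part of the ball beyond the 1-end of u\<close>
  obtain V1 where V1: "finite V1" "card V1 \<le> card A" "\<forall>v\<in>V1. set v \<subseteq> A \<and> Delta a v \<le> 8 * r / amin"
    "\<And>y. y \<in> iwords A \<Longrightarrow> y \<notin> icyl A u \<Longrightarrow> rho A a x y < r \<Longrightarrow> Pt a u y = 0 \<Longrightarrow> y \<in> (\<Union>v\<in>V1. icyl A v)"
  proof (cases "\<forall>z\<in>set u. z = 1")
    case True
    have "y \<in> (\<Union>v\<in>{}. icyl A v)" if "y \<in> iwords A" "y \<notin> icyl A u" "rho A a x y < r" "Pt a u y = 0" for y
    proof -
      have "rho A a y (conc u (cst 1)) < 3 * r"
        by (rule near_end[OF uA xu big r that(1,3)]) (use that(4) in auto)
      then show ?thesis using far_all[of 1 u "length u" y r] that(1,2) big r all_eq_replicate[OF True] by auto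
    qed
    then show ?thesis using that[of "{}"] by auto
  next
    case False
    then obtain t c i where tci: "c \<noteq> 1" "u = t @ c # replicate i 1" using list_decomp_last[of u 1] by blast
    have tA: "set t \<subseteq> A" using uA tci by auto
    have "y \<in> (\<Union>v\<in>VJ A a t (3 * r). icyl A v)"
      if "y \<in> iwords A" "y \<notin> icyl A u" "rho A a x y < r" "Pt a u y = 0" for y
    proof -
      have "rho A a y (conc u (cst 1)) < 3 * r"
        by (rule near_end[OF uA xu big r that(1,3)]) (use that(4) in auto)
      then show ?thesis using far_dec1[OF _ tci(1,2) that(1) big r] uA tci(2) by blast
    qed
    then show ?thesis using that[of "VJ A a t (3 * r)"] VJb[OF tA] VJc[of t] by blast
  qed
  \<comment> \<open>the part of the ball beyond the 2-end of u\<close>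
  obtain V2 where V2: "finite V2" "card V2 \<le> card A" "\<forall>v\<in>V2. set v \<subseteq> A \<and> Delta a v \<le> 8 * r / amin"
    "\<And>y. y \<in> iwords A \<Longrightarrow> y \<notin> icyl A u \<Longrightarrow> rho A a x y < r \<Longrightarrow> Pt a u y = Delta a u \<Longrightarrow> y \<in> (\<Union>v\<in>V2. icyl A v)"
  proof (cases "\<forall>z\<in>set u. z = 2")
    case True
    have "y \<in> (\<Union>v\<in>{}. icyl A v)" if "y \<in> iwords A" "y \<notin> icyl A u" "rho A a x y < r" "Pt a u y = Delta a u" for y
    proof -
      have "rho A a y (conc u (cst 2)) < 3 * r"
        by (rule near_end[OF uA xu big r that(1,3)]) (use that(4) in auto)
      then show ?thesis using far_all[of 2 u "length u" y r] that(1,2) big r all_eq_replicate[OF True] by auto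
    qed
    then show ?thesis using that[of "{}"] by auto
  next
    case False
    then obtain t c i where tci: "c \<noteq> 2" "u = t @ c # replicate i 2" using list_decomp_last[of u 2] by blast
    have tA: "set t \<subseteq> A" using uA tci by auto
    show ?thesis
    proof (cases "c = 1")
      case True
      have "y \<in> (\<Union>v\<in>VJ A a t (3 * r). icyl A v)"
        if "y \<in> iwords A" "y \<notin> icyl A u" "rho A a x y < r" "Pt a u y = Delta a u" for y
      proof -
        have "rho A a y (conc u (cst 2)) < 3 * r"
          by (rule near_end[OF uA xu big r that(1,3)]) (use that(4) in auto)
        then show ?thesis using far_dec2_1[OF _ _ that(1) big r] uA tci(2) True by blast
      qed
      then show ?thesis using that[of "VJ A a t (3 * r)"] VJb[OF tA] VJc[of t] by blast
    next
      case cn1: False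
      have "y \<in> (\<Union>v\<in>{}. icyl A v)"
        if "y \<in> iwords A" "y \<notin> icyl A u" "rho A a x y < r" "Pt a u y = Delta a u" for y
      proof -
        have "rho A a y (conc u (cst 2)) < 3 * r"
          by (rule near_end[OF uA xu big r that(1,3)]) (use that(4) in auto)
        then show ?thesis using far_dec2_c[OF _ _ tci(2) that(1,2) big r] uA tci cn1 by auto
      qed
      then show ?thesis using that[of "{}"] by auto
    qed
  qed
  define V where "V = insert u (V1 \<union> V2)"
  have "finite V" using V1 V2 by (simp add: V_def)
  moreover have "card V \<le> 2 * card A + 1"
  proof -
    have "card V \<le> Suc (card (V1 \<union> V2))" by (simp add: V_def card_insert_le_m1 card_insert_if)
    also have "card (V1 \<union> V2) \<le> card V1 + card V2" by (rule card_Un_le)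
    finally show ?thesis using V1(2) V2(2) by linarith
  qed
  moreover have "\<forall>v\<in>V. set v \<subseteq> A \<and> Delta a v \<le> 8 * r / amin" using V1(3) V2(3) uA small by (auto simp: V_def)
  moreover have "{y \<in> iwords A. rho A a x y < r} \<subseteq> (\<Union>v\<in>V. icyl A v)"
  proof
    fix y assume "y \<in> {y \<in> iwords A. rho A a x y < r}"
    then have y: "y \<in> iwords A" "rho A a x y < r" by auto
    show "y \<in> (\<Union>v\<in>V. icyl A v)"
    proof (cases "y \<in> icyl A u")
      case True
      then show ?thesis by (auto simp: V_def)
    next
      case False
      then have "\<not> (\<forall>i<length u. y i = u ! i)" using y by (simp add: icyl_iff)
      then have "Pt a u y = 0 \<or> Pt a u y = Delta a u" by (rule Pt_out)
      then show ?thesis using V1(4)[OF y(1) False y(2)] V2(4)[OF y(1) False y(2)] by (auto simp: V_def)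
    qed
  qed
  ultimately show ?thesis by blast
qed

end


declare cst_apply[simp del]

lemma pmf_exists:
  fixes f :: "nat \<Rightarrow> real"
  assumes nn: "\<And>i. 0 \<le> f i" and s: "f sums 1"
  shows "\<exists>p. \<forall>i. pmf p i = f i"
proof -
  have "(\<integral>\<^sup>+x. ennreal (f x) \<partial>count_space UNIV) = (\<Sum>i. ennreal (f i))"
    by (rule nn_integral_count_space_nat)
  also have "\<dots> = ennreal (\<Sum>i. f i)"
    by (rule suminf_ennreal2[OF nn sums_summable[OF s]])
  also have "\<dots> = 1" using sums_unique[OF s] by simp
  finally have "(\<integral>\<^sup>+x. ennreal (f x) \<partial>count_space UNIV) = 1" .
  then show ?thesis using pmf_embed_pmf[of f] nn by blast
qed

definition Pm :: "nat pmf \<Rightarrow> (nat \<Rightarrow> nat) measure" where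
  "Pm p = PiM UNIV (\<lambda>_. measure_pmf p)"

definition cylset :: "nat list \<Rightarrow> (nat \<Rightarrow> nat) set" where
  "cylset v = {w. \<forall>i<length v. w i = v ! i}"

lemma space_Pm[simp]: "space (Pm p) = UNIV"
  by (simp add: Pm_def space_PiM)

lemma prob_space_Pm: "prob_space (Pm p)"
  unfolding Pm_def by (rule prob_space_PiM) (rule measure_pmf.prob_space_axioms)

lemma cylset_emb: "cylset v = prod_emb UNIV (\<lambda>_. measure_pmf p) {..<length v} (\<Pi>\<^sub>E i\<in>{..<length v}. {v ! i})"
  unfolding cylset_def prod_emb_def by (simp add: restrict_PiE_iff set_eq_iff vimage_def Pi_iff) blast

lemma cylset_sets: "cylset v \<in> sets (Pm p)"
  unfolding cylset_emb[of v p] Pm_def by (rule sets_PiM_I) auto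

lemma prod_list_nth: "prod_list (map f v) = (\<Prod>i<length v. f (v ! i))"
proof (induction v)
  case Nil
  then show ?case by simp
next
  case (Cons x v)
  then show ?case by (simp del: prod.lessThan_Suc add: prod.lessThan_Suc_shift)
qed

lemma emeasure_cylset: "emeasure (Pm p) (cylset v) = ennreal (prod_list (map (pmf p) v))"
proof -
  have "emeasure (Pm p) (cylset v) = (\<Prod>i<length v. emeasure (measure_pmf p) {v ! i})"
    unfolding cylset_emb[of v p] Pm_def
    by (rule emeasure_PiM_emb) (auto intro: measure_pmf.prob_space_axioms)
  also have "\<dots> = (\<Prod>i<length v. ennreal (pmf p (v ! i)))" by (simp add: emeasure_pmf_single)
  also have "\<dots> = ennreal (\<Prod>i<length v. pmf p (v ! i))" by (rule prod_ennreal) simp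
  also have "\<dots> = ennreal (prod_list (map (pmf p) v))" by (simp add: prod_list_nth)
  finally show ?thesis .
qed

lemma iwords_sets: "iwords A \<in> sets (Pm p)"
proof -
  have "iwords A = (\<Inter>n. {w \<in> space (Pm p). w n \<in> A})" by (auto simp: iwords_iff)
  moreover have "{w \<in> space (Pm p). w n \<in> A} \<in> sets (Pm p)" for n
    unfolding Pm_def by (rule sets_Collect_single') auto
  ultimately show ?thesis by auto
qed

lemma AE_iwords: "set_pmf p \<subseteq> A \<Longrightarrow> AE w in Pm p. w \<in> iwords A"
proof -
  assume sp: "set_pmf p \<subseteq> A"
  have "AE w in Pm p. w n \<in> A" for n
    unfolding Pm_def
    by (rule AE_PiM_component) (use sp measure_pmf.prob_space_axioms in \<open>auto simp: AE_measure_pmf_iff\<close>)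
  then have "AE w in Pm p. \<forall>n. w n \<in> A" by (simp add: AE_all_countable)
  then show ?thesis by (simp add: iwords_iff)
qed

lemma icyl_eq: "icyl A v = cylset v \<inter> iwords A" by (auto simp: icyl_iff cylset_def)

lemma icyl_sets: "icyl A v \<in> sets (Pm p)"
  unfolding icyl_eq using cylset_sets iwords_sets by blast

lemma emeasure_icyl: "set_pmf p \<subseteq> A \<Longrightarrow> emeasure (Pm p) (icyl A v) = ennreal (prod_list (map (pmf p) v))"
proof -
  assume sp: "set_pmf p \<subseteq> A"
  have "emeasure (Pm p) (icyl A v) = emeasure (Pm p) (cylset v)"
    by (rule emeasure_eq_AE) (use AE_iwords[OF sp] icyl_sets cylset_sets in \<open>auto simp: icyl_eq\<close>)
  then show ?thesis by (simp add: emeasure_cylset)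
qed

lemma emeasure_not_iwords: "set_pmf p \<subseteq> A \<Longrightarrow> emeasure (Pm p) (UNIV - iwords A) = 0"
proof -
  assume sp: "set_pmf p \<subseteq> A"
  have c: "UNIV - iwords A \<in> sets (Pm p)" using sets.compl_sets[OF iwords_sets[of A p]] by simp
  have "{w \<in> space (Pm p). \<not> w \<in> iwords A} = UNIV - iwords A" by auto
  then show ?thesis using AE_iff_measurable[OF c, of "\<lambda>w. w \<in> iwords A"] AE_iwords[OF sp] by simp
qed


declare cst_apply[simp del]

definition Rq :: "nat set \<Rightarrow> (nat \<Rightarrow> real) \<Rightarrow> ((nat \<Rightarrow> nat) \<times> (nat \<Rightarrow> nat)) set" where
  "Rq A a = {(x, y). x \<in> iwords A \<and> y \<in> iwords A \<and> rho A a x y = 0}"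

definition rep :: "(nat \<Rightarrow> nat) set \<Rightarrow> (nat \<Rightarrow> nat)" where "rep X = (SOME x. x \<in> X)"

definition cls :: "nat set \<Rightarrow> (nat \<Rightarrow> real) \<Rightarrow> (nat \<Rightarrow> nat) \<Rightarrow> (nat \<Rightarrow> nat) set" where
  "cls A a x = Rq A a `` {x}"

lemma Tcarrier_eq: "Tcarrier A a = iwords A // Rq A a" by (simp add: Tcarrier_def Rq_def)
lemma Tdist_eq: "Tdist A a X Y = rho A a (rep X) (rep Y)" by (simp add: Tdist_def rep_def)

context wset
begin

lemma equiv_Rq: "equiv (iwords A) (Rq A a)"
proof (rule equivI)
  show "refl_on (iwords A) (Rq A a)" unfolding refl_on_def Rq_def by (auto simp: rho_self)
  show "Rq A a \<subseteq> iwords A \<times> iwords A" by (auto simp: Rq_def)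
  show "sym (Rq A a)" by (auto simp: sym_def Rq_def rho_sym)
  show "trans (Rq A a)"
  proof (rule transI)
    fix x y z assume "(x, y) \<in> Rq A a" "(y, z) \<in> Rq A a"
    then have h: "x \<in> iwords A" "y \<in> iwords A" "z \<in> iwords A" "rho A a x y = 0" "rho A a y z = 0"
      by (auto simp: Rq_def)
    have "rho A a x z \<le> 0" using rho_triangle[OF h(1,2,3)] h(4,5) by simp
    then show "(x, z) \<in> Rq A a" using rho_nonneg[OF h(1,3)] h by (auto simp: Rq_def)
  qed
qed

lemma cls_mem: "x \<in> iwords A \<Longrightarrow> y \<in> cls A a x \<longleftrightarrow> y \<in> iwords A \<and> rho A a x y = 0"
  by (auto simp: cls_def Rq_def)

lemma rho_cong: assumes "x \<in> iwords A" "x' \<in> iwords A" "rho A a x x' = 0" "z \<in> iwords A"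
  shows "rho A a x z = rho A a x' z"
proof -
  have "rho A a x z \<le> rho A a x x' + rho A a x' z" by (rule rho_triangle[OF assms(1,2,4)])
  moreover have "rho A a x' z \<le> rho A a x' x + rho A a x z" by (rule rho_triangle[OF assms(2,1,4)])
  ultimately show ?thesis using assms(3) rho_sym[of x' x] by simp
qed

lemma rep_cls: assumes x: "x \<in> iwords A"
  shows "rep (cls A a x) \<in> iwords A" "rho A a x (rep (cls A a x)) = 0"
proof -
  have "x \<in> cls A a x" using cls_mem[OF x] rho_self[OF x] x by simp
  then have "rep (cls A a x) \<in> cls A a x" unfolding rep_def by (rule someI[of "\<lambda>y. y \<in> cls A a x"])
  then show "rep (cls A a x) \<in> iwords A" "rho A a x (rep (cls A a x)) = 0" using cls_mem[OF x] by auto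
qed

lemma Tcarrier_cls: "X \<in> Tcarrier A a \<Longrightarrow> \<exists>x\<in>iwords A. X = cls A a x"
  by (auto simp: Tcarrier_eq cls_def elim!: quotientE)

lemma cls_in: "x \<in> iwords A \<Longrightarrow> cls A a x \<in> Tcarrier A a"
  by (simp add: Tcarrier_eq cls_def quotientI)

lemma rep_iwords: "X \<in> Tcarrier A a \<Longrightarrow> rep X \<in> iwords A"
  using Tcarrier_cls rep_cls by blast

lemma rho_rep_cls: "x \<in> iwords A \<Longrightarrow> z \<in> iwords A \<Longrightarrow> rho A a (rep (cls A a x)) z = rho A a x z"
  using rho_cong[OF _ rep_cls(1) rep_cls(2)] by metis

lemma Tdist_cls: assumes X: "X \<in> Tcarrier A a" and w: "w \<in> iwords A"
  shows "Tdist A a X (cls A a w) = rho A a (rep X) w"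
proof -
  have "Tdist A a X (cls A a w) = rho A a (rep (cls A a w)) (rep X)" by (simp add: Tdist_eq rho_sym)
  also have "\<dots> = rho A a w (rep X)" by (rule rho_rep_cls[OF w rep_iwords[OF X]])
  finally show ?thesis by (simp add: rho_sym)
qed

lemma Tdist_nonneg: "X \<in> Tcarrier A a \<Longrightarrow> Y \<in> Tcarrier A a \<Longrightarrow> 0 \<le> Tdist A a X Y"
  by (simp add: Tdist_eq rho_nonneg rep_iwords)
lemma Tdist_le1: "X \<in> Tcarrier A a \<Longrightarrow> Y \<in> Tcarrier A a \<Longrightarrow> Tdist A a X Y \<le> 1"
  by (simp add: Tdist_eq rho_le1 rep_iwords)
lemma Tdist_sym: "Tdist A a X Y = Tdist A a Y X"
  by (simp add: Tdist_eq rho_sym)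
lemma Tdist_triangle: "X \<in> Tcarrier A a \<Longrightarrow> Y \<in> Tcarrier A a \<Longrightarrow> Z \<in> Tcarrier A a \<Longrightarrow>
    Tdist A a X Z \<le> Tdist A a X Y + Tdist A a Y Z"
  by (simp add: Tdist_eq rho_triangle rep_iwords)

lemma ball_open: "X \<in> Tcarrier A a \<Longrightarrow> mopen' (Tcarrier A a) (Tdist A a) (mball' (Tcarrier A a) (Tdist A a) X r)"
  unfolding mopen'_def
proof (intro conjI ballI)
  assume X: "X \<in> Tcarrier A a"
  show "mball' (Tcarrier A a) (Tdist A a) X r \<subseteq> Tcarrier A a" by (auto simp: mball'_def)
  fix Y assume Y: "Y \<in> mball' (Tcarrier A a) (Tdist A a) X r"
  then have Y': "Y \<in> Tcarrier A a" "Tdist A a X Y < r" by (auto simp: mball'_def)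
  show "\<exists>e>0. mball' (Tcarrier A a) (Tdist A a) Y e \<subseteq> mball' (Tcarrier A a) (Tdist A a) X r"
  proof (intro exI conjI)
    show "0 < r - Tdist A a X Y" using Y' by simp
    show "mball' (Tcarrier A a) (Tdist A a) Y (r - Tdist A a X Y) \<subseteq> mball' (Tcarrier A a) (Tdist A a) X r"
    proof
      fix Z assume "Z \<in> mball' (Tcarrier A a) (Tdist A a) Y (r - Tdist A a X Y)"
      then have Z: "Z \<in> Tcarrier A a" "Tdist A a Y Z < r - Tdist A a X Y" by (auto simp: mball'_def)
      have "Tdist A a X Z \<le> Tdist A a X Y + Tdist A a Y Z" by (rule Tdist_triangle[OF X Y'(1) Z(1)])
      then show "Z \<in> mball' (Tcarrier A a) (Tdist A a) X r" using Z by (auto simp: mball'_def)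
    qed
  qed
qed

definition proj :: "(nat \<Rightarrow> nat) \<Rightarrow> (nat \<Rightarrow> nat) set" where
  "proj w = cls A a (if w \<in> iwords A then w else cst 1)"

lemma proj_in: "proj w \<in> Tcarrier A a"
  unfolding proj_def by (rule cls_in) (use cst_iwords[OF A1] in auto)

lemma proj_iwords: "w \<in> iwords A \<Longrightarrow> proj w = cls A a w" by (simp add: proj_def)

lemma proj_open_sets:
  assumes U: "mopen' (Tcarrier A a) (Tdist A a) U"
  shows "proj -` U \<inter> space (Pm p) \<in> sets (Pm p)"
proof -
  let ?M = "Tcarrier A a" and ?d = "Tdist A a"
  define S where "S = {v. set v \<subseteq> A \<and> icyl A v \<subseteq> {w \<in> iwords A. cls A a w \<in> U}}"
  have eq1: "{w \<in> iwords A. cls A a w \<in> U} = (\<Union>v\<in>S. icyl A v)"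
  proof
    show "(\<Union>v\<in>S. icyl A v) \<subseteq> {w \<in> iwords A. cls A a w \<in> U}" by (auto simp: S_def)
    show "{w \<in> iwords A. cls A a w \<in> U} \<subseteq> (\<Union>v\<in>S. icyl A v)"
    proof
      fix w assume "w \<in> {w \<in> iwords A. cls A a w \<in> U}"
      then have w: "w \<in> iwords A" "cls A a w \<in> U" by auto
      obtain r where r: "r > 0" "mball' ?M ?d (cls A a w) r \<subseteq> U" using U w(2) by (auto simp: mopen'_def)
      obtain n where n: "(1/2::real) ^ n < r" using half_pow_small[OF r(1), of 0] by auto
      define v where "v = pref w n"
      have "icyl A v \<subseteq> {w \<in> iwords A. cls A a w \<in> U}"
      proof
        fix w' assume w': "w' \<in> icyl A v"
        then have w'i: "w' \<in> iwords A" by (simp add: icyl_iff)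
        have "?d (cls A a w) (cls A a w') = rho A a (rep (cls A a w)) w'"
          by (rule Tdist_cls[OF cls_in[OF w(1)] w'i])
        also have "\<dots> = rho A a w w'" by (rule rho_rep_cls[OF w(1) w'i])
        also have "\<dots> \<le> Delta a v" by (rule rho_cyl[OF _ w']) (simp add: v_def pref_icyl[OF w(1)])
        also have "\<dots> \<le> (1/2) ^ n" using Delta_le_pow[OF pref_set[OF w(1)]] by (simp add: v_def)
        finally have "?d (cls A a w) (cls A a w') < r" using n by linarith
        then have "cls A a w' \<in> mball' ?M ?d (cls A a w) r" using cls_in[OF w'i] by (simp add: mball'_def)
        then show "w' \<in> {w \<in> iwords A. cls A a w \<in> U}" using r(2) w'i by auto
      qed
      moreover have "set v \<subseteq> A" by (simp add: v_def pref_set[OF w(1)])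
      moreover have "w \<in> icyl A v" by (simp add: v_def pref_icyl[OF w(1)])
      ultimately show "w \<in> (\<Union>v\<in>S. icyl A v)" by (auto simp: S_def)
    qed
  qed
  have m1: "{w \<in> iwords A. cls A a w \<in> U} \<in> sets (Pm p)"
    unfolding eq1 by (rule sets.countable_UN) (auto intro: icyl_sets)
  have m2: "UNIV - iwords A \<in> sets (Pm p)" using sets.compl_sets[OF iwords_sets[of A p]] by simp
  have "proj -` U \<inter> space (Pm p) = {w \<in> iwords A. cls A a w \<in> U} \<union>
      (if cls A a (cst 1) \<in> U then UNIV - iwords A else {})" (is "_ = ?R")
  proof (rule set_eqI)
    fix x
    show "x \<in> proj -` U \<inter> space (Pm p) \<longleftrightarrow> x \<in> ?R"
    proof (cases "x \<in> iwords A")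
      case True
      then show ?thesis unfolding proj_def by simp
    next
      case False
      then have "proj x = cls A a (cst 1)" unfolding proj_def by (simp only: if_False)
      then show ?thesis using False by simp
    qed
  qed
  then show ?thesis using m1 m2 by auto
qed

lemma proj_open_sets': "mopen' (Tcarrier A a) (Tdist A a) U \<Longrightarrow> proj -` U \<in> sets (Pm p)"
  using proj_open_sets by simp

definition opens where "opens = {U. mopen' (Tcarrier A a) (Tdist A a) U}"

lemma opens_Pow: "opens \<subseteq> Pow (Tcarrier A a)" by (auto simp: opens_def mopen'_def)

lemma proj_measurable: "proj \<in> measurable (Pm p) (sigma (Tcarrier A a) opens)"
  by (rule measurable_measure_of[OF opens_Pow]) (use proj_in proj_open_sets' in \<open>auto simp: opens_def\<close>)

definition mu :: "nat pmf \<Rightarrow> (nat \<Rightarrow> nat) set measure" where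
  "mu p = distr (Pm p) (sigma (Tcarrier A a) opens) proj"

lemma space_mu: "space (mu p) = Tcarrier A a"
  by (simp add: mu_def opens_Pow)

lemma sets_mu: "sets (mu p) = borel_sets' (Tcarrier A a) (Tdist A a)"
proof -
  have "sets (mu p) = sigma_sets (Tcarrier A a) opens" unfolding mu_def by (simp add: opens_Pow)
  then show ?thesis by (simp add: borel_sets'_def opens_def)
qed

lemma emeasure_mu_ball: assumes X: "X \<in> Tcarrier A a"
  shows "emeasure (mu p) (mball' (Tcarrier A a) (Tdist A a) X r) =
         emeasure (Pm p) (proj -` mball' (Tcarrier A a) (Tdist A a) X r)"
proof -
  have "mball' (Tcarrier A a) (Tdist A a) X r \<in> sets (sigma (Tcarrier A a) opens)"
    using ball_open[OF X] opens_Pow by (auto simp: opens_def)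
  then show ?thesis unfolding mu_def by (simp add: emeasure_distr[OF proj_measurable])
qed

lemma proj_ball_iwords: assumes X: "X \<in> Tcarrier A a" and w: "w \<in> iwords A"
  shows "w \<in> proj -` mball' (Tcarrier A a) (Tdist A a) X r \<longleftrightarrow> rho A a (rep X) w < r"
  using Tdist_cls[OF X w] proj_in[of w] by (simp add: mball'_def proj_iwords[OF w])

lemma diam_le1: "diam' (Tdist A a) (Tcarrier A a) \<le> 1"
proof (cases "Tcarrier A a = {}")
  case True
  then show ?thesis by (simp add: diam'_def)
next
  case False
  then obtain X where X: "X \<in> Tcarrier A a" by blast
  have ne: "{Tdist A a x y | x y. x \<in> Tcarrier A a \<and> y \<in> Tcarrier A a} \<noteq> {}" using X by blast
  have "Sup {Tdist A a x y | x y. x \<in> Tcarrier A a \<and> y \<in> Tcarrier A a} \<le> 1"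
    by (rule cSup_least[OF ne]) (use Tdist_le1 in auto)
  then show ?thesis using False by (simp add: diam'_def)
qed

end


declare cst_apply[simp del]

lemma wset_m: "is_weight a \<Longrightarrow> 2 \<le> m \<Longrightarrow> wset {1..m} a"
  by (unfold_locales) auto

lemma wset_N: "is_weight a \<Longrightarrow> wset {1..} a"
  by (unfold_locales) auto

lemma weight_facts: assumes W: "is_weight a"
  shows "\<And>i. 1 \<le> i \<Longrightarrow> 0 < a i" "\<And>i. 1 \<le> i \<Longrightarrow> a i \<le> 1/2" "\<And>i j. 1 \<le> i \<Longrightarrow> i \<le> j \<Longrightarrow> a j \<le> a i"
  using W unfolding is_weight_def by auto

lemma Psi_root_pos: assumes W: "is_weight a" and m: "2 \<le> m" and s: "Psi m a s = 1"
  shows "0 < s"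
proof (rule ccontr)
  assume "\<not> 0 < s"
  then have s0: "s \<le> 0" by simp
  have "1 \<le> a i powr s" if "i \<in> {1..m}" for i
  proof -
    have ai: "0 < a i" "a i \<le> 1" using weight_facts(1,2)[OF W, of i] that by auto
    have "a i powr 0 \<le> a i powr s" by (rule powr_mono') (use s0 ai in auto)
    then show ?thesis using ai by simp
  qed
  then have "(\<Sum>i=1..m. (1::real)) \<le> (\<Sum>i=1..m. a i powr s)" by (intro sum_mono) auto
  then have "real m \<le> 1" using s by (simp add: Psi_def)
  then show False using m by simp
qed

lemma ahlfors_m:
  assumes W: "is_weight a" and m: "2 \<le> m" and s: "Psi m a s = 1"
  shows "ahlfors_regular (Tcarrier {1..m} a) (Tdist {1..m} a) s"
proof -
  interpret wset "{1..m}" a by (rule wset_m[OF W m])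
  let ?A = "{1..m::nat}"
  let ?M = "Tcarrier ?A a" and ?d = "Tdist ?A a"
  have s0: "0 < s" by (rule Psi_root_pos[OF W m s])
  define f where "f i = (if i \<in> ?A then a i powr s else 0)" for i
  have fs: "f sums 1"
  proof -
    have fe: "f = (\<lambda>i. if i \<in> ?A then a i powr s else 0)" by (simp add: fun_eq_iff f_def)
    have "(\<lambda>i. if i \<in> ?A then a i powr s else 0) sums (\<Sum>i\<in>?A. a i powr s)"
      by (rule sums_If_finite_set) simp
    moreover have "(\<Sum>i\<in>?A. a i powr s) = 1" using s by (simp only: Psi_def)
    ultimately show ?thesis using fe by simp
  qed
  obtain p where p: "\<forall>i. pmf p i = f i" using pmf_exists[OF _ fs] by (force simp: f_def)
  have sp: "set_pmf p \<subseteq> ?A" using p by (auto simp: set_pmf_eq f_def split: if_splits)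
  have PD: "prod_list (map (pmf p) v) = Delta a v powr s" if "set v \<subseteq> ?A" for v
    using that
  proof (induction v)
    case Nil
    then show ?case by simp
  next
    case (Cons c v)
    then show ?case using p by (simp add: f_def powr_mult)
  qed
  have Pcyl: "emeasure (Pm p) (icyl ?A v) = ennreal (Delta a v powr s)" if "set v \<subseteq> ?A" for v
    using emeasure_icyl[OF sp, of v] PD[OF that] by simp
  define amin where "amin = a m"
  have m1: "1 \<le> m" using m by simp
  have am: "0 < amin" "amin \<le> 1" "\<forall>c\<in>?A. amin \<le> a c"
  proof -
    show "0 < amin" using weight_facts(1)[OF W m1] by (simp add: amin_def)
    have "a m \<le> 1/2" using weight_facts(2)[OF W m1] .
    then show "amin \<le> 1" by (simp add: amin_def)
    show "\<forall>c\<in>?A. amin \<le> a c" using weight_facts(3)[OF W] by (auto simp: amin_def)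
  qed
  have amp: "0 < amin powr s" using am by simp
  define C where "C = max (1 / amin powr s) ((2 * m + 1) * (8 / amin) powr s) + 2"
  have "0 \<le> 1 / amin powr s" using amp by simp
  then have "0 \<le> max (1 / amin powr s) ((2 * m + 1) * (8 / amin) powr s)" by linarith
  then have C1: "1 < C" unfolding C_def by linarith
  have C2: "1 / amin powr s \<le> C" "(2 * m + 1) * (8 / amin) powr s \<le> C" by (simp_all add: C_def)
  show ?thesis
    unfolding ahlfors_regular_def
  proof (intro exI[of _ "mu p"] exI[of _ C] conjI ballI allI impI)
    show "space (mu p) = ?M" by (rule space_mu)
    show "sets (mu p) = borel_sets' ?M ?d" by (rule sets_mu)
    show "1 < C" by (rule C1)
    fix X r assume X: "X \<in> ?M" and r: "0 < r \<and> r < diam' ?d ?M"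
    define x0 where "x0 = rep X"
    have x0: "x0 \<in> iwords ?A" using rep_iwords[OF X] by (simp add: x0_def)
    have r0: "0 < r" and r1: "r < 1" using r diam_le1 by auto
    have bs: "proj -` mball' ?M ?d X r \<in> sets (Pm p)" by (rule proj_open_sets'[OF ball_open[OF X]])
    have meq: "emeasure (mu p) (mball' ?M ?d X r) = emeasure (Pm p) (proj -` mball' ?M ?d X r)"
      by (rule emeasure_mu_ball[OF X])
    show "ennreal (r powr s / C) \<le> emeasure (mu p) (mball' ?M ?d X r)"
    proof -
      have ex: "\<exists>k. Delta a (pref x0 k) < r"
      proof -
        obtain n where n: "(1/2::real) ^ n < r" using half_pow_small[OF r0, of 0] by auto
        then show ?thesis using Delta_le_pow[OF pref_set[OF x0], of n] by (intro exI[of _ n]) simp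
      qed
      define k where "k = (LEAST k. Delta a (pref x0 k) < r)"
      have kr: "Delta a (pref x0 k) < r" unfolding k_def by (rule LeastI_ex[OF ex])
      have k0: "k \<noteq> 0"
      proof
        assume "k = 0"
        then have "pref x0 k = []" by (simp add: pref_def)
        then show False using kr r1 by simp
      qed
      then obtain k' where k': "k = Suc k'" by (cases k) auto
      have k'r: "\<not> Delta a (pref x0 k') < r"
        using not_less_Least[of k' "\<lambda>k. Delta a (pref x0 k) < r"] k' by (simp add: k_def)
      define v where "v = pref x0 k"
      have vA: "set v \<subseteq> ?A" unfolding v_def by (rule pref_set[OF x0])
      have "v = pref x0 k' @ [x0 k']" by (simp add: v_def k' pref_def)
      then have "Delta a v = Delta a (pref x0 k') * a (x0 k')" by (simp add: Delta_append)
      moreover have "amin \<le> a (x0 k')" using am x0 by (simp add: iwords_iff)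
      moreover have "r \<le> Delta a (pref x0 k')" using k'r by simp
      ultimately have rv: "r * amin \<le> Delta a v"
        using mult_mono[of r "Delta a (pref x0 k')" amin "a (x0 k')"] am r0 by simp
      have sub: "icyl ?A v \<subseteq> proj -` mball' ?M ?d X r"
      proof
        fix w assume w: "w \<in> icyl ?A v"
        then have wi: "w \<in> iwords ?A" by (simp add: icyl_iff)
        have "rho ?A a x0 w \<le> Delta a v" by (rule rho_cyl[OF _ w]) (unfold v_def, rule pref_icyl[OF x0])
        then have "rho ?A a (rep X) w < r" using kr by (simp add: v_def x0_def)
        then show "w \<in> proj -` mball' ?M ?d X r" using proj_ball_iwords[OF X wi] by simp
      qed
      have "r powr s / C \<le> (r * amin) powr s"
      proof -
        have "1 / C \<le> amin powr s"
        proof -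
          have "1 \<le> C * amin powr s" using C2(1) amp by (simp add: field_simps)
          then show ?thesis using C1 by (simp add: field_simps)
        qed
        then have "r powr s * (1 / C) \<le> r powr s * amin powr s" by (intro mult_left_mono) auto
        then show ?thesis by (simp add: powr_mult)
      qed
      also have "\<dots> \<le> Delta a v powr s" by (rule powr_mono2) (use s0 r0 am rv in auto)
      finally have "ennreal (r powr s / C) \<le> emeasure (Pm p) (icyl ?A v)"
        using Pcyl[OF vA] by (simp add: ennreal_leI)
      also have "\<dots> \<le> emeasure (Pm p) (proj -` mball' ?M ?d X r)" by (rule emeasure_mono[OF sub bs])
      finally show ?thesis using meq by simp
    qed
    show "emeasure (mu p) (mball' ?M ?d X r) \<le> ennreal (C * r powr s)"
    proof -
      obtain V where V: "finite V" "card V \<le> 2 * card ?A + 1" "\<forall>v\<in>V. set v \<subseteq> ?A \<and> Delta a v \<le> 8 * r / amin"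
        "{y \<in> iwords ?A. rho ?A a x0 y < r} \<subseteq> (\<Union>v\<in>V. icyl ?A v)"
        using ball_cover[OF _ am x0 r0] by auto
      have sub: "proj -` mball' ?M ?d X r \<subseteq> (UNIV - iwords ?A) \<union> (\<Union>v\<in>V. icyl ?A v)"
      proof
        fix w assume w: "w \<in> proj -` mball' ?M ?d X r"
        show "w \<in> (UNIV - iwords ?A) \<union> (\<Union>v\<in>V. icyl ?A v)"
        proof (cases "w \<in> iwords ?A")
          case True
          then have "rho ?A a x0 w < r" using proj_ball_iwords[OF X True] w by (simp add: x0_def)
          then show ?thesis using V(4) True by blast
        qed simp
      qed
      have U1: "UNIV - iwords ?A \<in> sets (Pm p)" using sets.compl_sets[OF iwords_sets[of ?A p]] by simp
      have U2: "(\<Union>v\<in>V. icyl ?A v) \<in> sets (Pm p)" using V(1) icyl_sets by blast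
      have "emeasure (Pm p) (proj -` mball' ?M ?d X r)
          \<le> emeasure (Pm p) ((UNIV - iwords ?A) \<union> (\<Union>v\<in>V. icyl ?A v))"
        by (rule emeasure_mono[OF sub]) (use U1 U2 in blast)
      also have "\<dots> \<le> emeasure (Pm p) (UNIV - iwords ?A) + emeasure (Pm p) (\<Union>v\<in>V. icyl ?A v)"
        by (rule emeasure_subadditive[OF U1 U2])
      also have "emeasure (Pm p) (UNIV - iwords ?A) = 0" by (rule emeasure_not_iwords[OF sp])
      also have "emeasure (Pm p) (\<Union>v\<in>V. icyl ?A v) \<le> (\<Sum>v\<in>V. emeasure (Pm p) (icyl ?A v))"
        by (rule emeasure_subadditive_finite[OF V(1)]) (auto intro: icyl_sets)
      also have "(\<Sum>v\<in>V. emeasure (Pm p) (icyl ?A v)) = (\<Sum>v\<in>V. ennreal (Delta a v powr s))"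
        using Pcyl V(3) by (intro sum.cong) auto
      also have "\<dots> = ennreal (\<Sum>v\<in>V. Delta a v powr s)" by (rule sum_ennreal) simp
      also have "(\<Sum>v\<in>V. Delta a v powr s) \<le> (\<Sum>v\<in>V. (8 * r / amin) powr s)"
        by (intro sum_mono powr_mono2) (use s0 V(3) Delta_nonneg in auto)
      also have "\<dots> = real (card V) * ((8 / amin) powr s * r powr s)"
        by (simp add: powr_mult powr_divide field_simps)
      also have "\<dots> \<le> real (2 * m + 1) * ((8 / amin) powr s * r powr s)"
        using V(2) by (intro mult_right_mono) auto
      also have "\<dots> = ((2 * m + 1) * (8 / amin) powr s) * r powr s" by simp
      also have "\<dots> \<le> C * r powr s" using C2(2) by (intro mult_right_mono) auto
      finally show ?thesis using meq by (simp add: ennreal_leI)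
    qed
  qed
qed


declare cst_apply[simp del]

lemma Psi_cont: "is_weight a \<Longrightarrow> continuous_on S (\<lambda>t. Psi m a t)"
  unfolding Psi_def
proof (intro continuous_on_sum ballI)
  fix i assume W: "is_weight a" and i: "i \<in> {1..m}"
  have "0 < a i" using weight_facts(1)[OF W] i by auto
  then show "continuous_on S (\<lambda>t. a i powr t)" by (intro continuous_intros) auto
qed

lemma Psi_strict: assumes W: "is_weight a" and m: "1 \<le> m" and st: "s < t"
  shows "Psi m a t < Psi m a s"
  unfolding Psi_def
proof (rule sum_strict_mono)
  show "finite {1..m}" by simp
  show "{1..m} \<noteq> {}" using m by simp
  fix i assume i: "i \<in> {1..m}"
  have "0 < a i" "a i < 1" using weight_facts(1,2)[OF W, of i] i by auto
  then show "a i powr t < a i powr s" by (rule powr_less_mono'[OF _ _ st])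
qed

lemma Psi_root: assumes W: "is_weight a" and m: "2 \<le> m"
  shows "\<exists>!s. Psi m a s = 1"
proof (rule ex_ex1I)
  have P0: "Psi m a 0 = real m"
  proof -
    have "Psi m a 0 = (\<Sum>i=1..m. (1::real))"
      unfolding Psi_def by (intro sum.cong) (use weight_facts(1)[OF W] in \<open>auto simp: less_imp_neq[symmetric]\<close>)
    then show ?thesis by simp
  qed
  have PT: "Psi m a (real m) \<le> 1"
  proof -
    have "Psi m a (real m) \<le> (\<Sum>i=1..m. (1/2::real) ^ m)"
      unfolding Psi_def
    proof (intro sum_mono)
      fix i assume i: "i \<in> {1..m}"
      have ai: "0 < a i" "a i \<le> 1/2" using weight_facts(1,2)[OF W, of i] i by auto
      have "a i powr real m = a i ^ m" using ai by (simp add: powr_realpow)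
      also have "\<dots> \<le> (1/2) ^ m" using ai by (intro power_mono) auto
      finally show "a i powr real m \<le> (1/2) ^ m" .
    qed
    also have "\<dots> = real m / 2 ^ m" by (simp add: power_divide)
    also have "\<dots> \<le> 1"
    proof -
      have "m < 2 ^ m" by (rule less_exp)
      then have "real m < real (2 ^ m)" by (simp only: of_nat_less_iff)
      then have "real m < 2 ^ m" by simp
      then show ?thesis by simp
    qed
    finally show ?thesis .
  qed
  show "\<exists>s. Psi m a s = 1"
  proof -
    have "\<exists>x. 0 \<le> x \<and> x \<le> real m \<and> Psi m a x = 1"
      by (rule IVT2'[of "\<lambda>t. Psi m a t"]) (use PT P0 m Psi_cont[OF W] in auto)
    then show ?thesis by blast
  qed
  fix x y assume "Psi m a x = 1" "Psi m a y = 1"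
  then show "x = y" using Psi_strict[OF W, of m] m by (metis less_irrefl linorder_neqE_linordered_idom one_le_numeral order_trans)
qed


declare cst_apply[simp del]

context wset
begin

lemma diam_cyl: assumes v: "set v \<subseteq> A"
  shows "0 \<le> diam' (Tdist A a) (cls A a ` icyl A v)" "diam' (Tdist A a) (cls A a ` icyl A v) \<le> Delta a v"
    "cls A a ` icyl A v \<noteq> {}"
proof -
  let ?U = "cls A a ` icyl A v"
  have z: "conc v (cst 1) \<in> icyl A v"
    using conc_iwords[OF v cst_iwords[OF A1]] by (simp add: icyl_iff)
  show ne: "?U \<noteq> {}" using z by blast
  let ?S = "{Tdist A a X Y | X Y. X \<in> ?U \<and> Y \<in> ?U}"
  have Sne: "?S \<noteq> {}" using ne by blast
  have Sb: "t \<le> Delta a v" if tS: "t \<in> ?S" for t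
  proof -
    obtain x y where xy: "x \<in> icyl A v" "y \<in> icyl A v" "t = Tdist A a (cls A a x) (cls A a y)"
      using tS by blast
    have xi: "x \<in> iwords A" and yi: "y \<in> iwords A" using xy by (auto simp: icyl_iff)
    have "Tdist A a (cls A a x) (cls A a y) = rho A a (rep (cls A a x)) y" by (rule Tdist_cls[OF cls_in[OF xi] yi])
    also have "\<dots> = rho A a x y" by (rule rho_rep_cls[OF xi yi])
    also have "\<dots> \<le> Delta a v" by (rule rho_cyl[OF xy(1,2)])
    finally show ?thesis using xy by simp
  qed
  have "Sup ?S \<le> Delta a v" by (rule cSup_least[OF Sne Sb])
  then show "diam' (Tdist A a) ?U \<le> Delta a v" using ne by (simp add: diam'_def)
  have bdd: "bdd_above ?S" by (rule bdd_aboveI[of _ "Delta a v"]) (rule Sb)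
  obtain x where x: "x \<in> icyl A v" using z by blast
  have xi: "x \<in> iwords A" using x by (simp add: icyl_iff)
  have "Tdist A a (cls A a x) (cls A a x) \<in> ?S" using x by blast
  then have "Tdist A a (cls A a x) (cls A a x) \<le> Sup ?S" by (rule cSup_upper[OF _ bdd])
  moreover have "0 \<le> Tdist A a (cls A a x) (cls A a x)" using Tdist_nonneg cls_in[OF xi] by blast
  ultimately show "0 \<le> diam' (Tdist A a) ?U" using ne by (simp add: diam'_def)
qed

end

lemma Psi_mono: "is_weight a \<Longrightarrow> m \<le> n \<Longrightarrow> Psi m a s \<le> Psi n a s"
  unfolding Psi_def by (rule sum_mono2) auto

lemma Psi_partial: "(\<Sum>i<Suc n. (if 1 \<le> i then a i powr s else 0)) = Psi n a s"
proof (induction n)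
  case 0
  then show ?case by (simp add: Psi_def)
next
  case (Suc n)
  have "(\<Sum>i<Suc (Suc n). (if 1 \<le> i then a i powr s else 0)) =
        (\<Sum>i<Suc n. (if 1 \<le> i then a i powr s else 0)) + a (Suc n) powr s" by simp
  also have "\<dots> = Psi (Suc n) a s" using Suc by (simp add: Psi_def)
  finally show ?case .
qed

lemma hdim_N:
  assumes W: "is_weight a" and s: "0 < s" and L: "(\<lambda>m. Psi m a s) \<longlonglongrightarrow> L" and L1: "L < 1"
  shows "hausdorff_dim (Tcarrier {1..} a) (Tdist {1..} a) \<le> ereal s"
proof -
  interpret wset "{1..}" a by (rule wset_N[OF W])
  let ?A = "{1..} :: nat set"
  let ?M = "Tcarrier ?A a" and ?d = "Tdist ?A a"
  have P1: "Psi 1 a s = (1/2) powr s" using a1 by (simp add: Psi_def)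
  have Lpos: "0 < L"
  proof -
    have "Psi 1 a s \<le> L"
      by (rule LIMSEQ_le_const[OF L]) (use Psi_mono[OF W] in auto)
    moreover have "0 < Psi 1 a s" using P1 by simp
    ultimately show ?thesis by linarith
  qed
  define g where "g i = (if 1 \<le> i then a i powr s else 0)" for i :: nat
  have gs: "g sums L"
    unfolding sums_def
  proof (rule LIMSEQ_imp_Suc)
    show "(\<lambda>n. \<Sum>i<Suc n. g i) \<longlonglongrightarrow> L" using L Psi_partial[of a s] by (simp add: g_def)
  qed
  define f where "f i = g i / L" for i
  have fs: "f sums 1" using sums_divide[OF gs, of L] Lpos by (simp add: f_def[abs_def])
  have fnn: "0 \<le> f i" for i using Lpos by (simp add: f_def g_def)
  obtain q where q: "\<forall>i. pmf q i = f i" using pmf_exists[OF fnn fs] by blast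
  have sq: "set_pmf q \<subseteq> ?A" using q by (auto simp: set_pmf_eq f_def g_def split: if_splits)
  have PD: "prod_list (map (pmf q) v) = Delta a v powr s / L ^ length v" if "set v \<subseteq> ?A" for v
    using that
  proof (induction v)
    case Nil
    then show ?case by simp
  next
    case (Cons c v)
    then show ?case using q by (simp add: f_def g_def powr_mult)
  qed
  have pre0: "hausdorff_pre ?M ?d s \<delta> ?M = 0" if d: "0 < \<delta>" for \<delta>
  proof -
    have bound: "hausdorff_pre ?M ?d s \<delta> ?M \<le> ennreal (L ^ n)" if n: "1 \<le> n" "(1/2::real) ^ n \<le> \<delta>" for n
    proof -
      define F where "F = fwords ?A n"
      have cF: "countable F" by simp
      have iF: "infinite F"
      proof -
        define h where "h k = replicate (n - 1) 1 @ [Suc k]" for k :: nat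
        have "inj h" by (auto simp: inj_def h_def)
        moreover have "range h \<subseteq> F" using n by (auto simp: h_def F_def fwords_iff)
        ultimately show ?thesis using range_inj_infinite infinite_super by blast
      qed
      define e where "e = from_nat_into F"
      have be: "bij_betw e UNIV F" unfolding e_def by (rule bij_betw_from_nat_into[OF cF iF])
      have eF: "e k \<in> F" for k using be by (auto simp: bij_betw_def)
      have eA: "set (e k) \<subseteq> ?A" "length (e k) = n" for k using eF[of k] by (auto simp: F_def fwords_iff)
      define U where "U k = cls ?A a ` icyl ?A (e k)" for k
      have Uin: "U \<in> {U. (\<forall>i. U i \<subseteq> ?M \<and> diam' ?d (U i) \<le> \<delta>) \<and> ?M \<subseteq> (\<Union>i. U i)}"
      proof (intro CollectI conjI allI)
        fix i
        show "U i \<subseteq> ?M"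
        proof
          fix X assume "X \<in> U i"
          then obtain x where x: "x \<in> icyl ?A (e i)" "X = cls ?A a x" unfolding U_def by blast
          have "x \<in> iwords ?A" using x(1) unfolding icyl_def by blast
          then show "X \<in> ?M" using cls_in x(2) by blast
        qed
        have "diam' ?d (U i) \<le> Delta a (e i)" using diam_cyl(2)[OF eA(1)] by (simp add: U_def)
        also have "\<dots> \<le> (1/2) ^ n" using Delta_le_pow[OF eA(1)] eA(2) by simp
        finally show "diam' ?d (U i) \<le> \<delta>" using n by linarith
      next
        show "?M \<subseteq> (\<Union>i. U i)"
        proof
          fix X assume X: "X \<in> ?M"
          then obtain x where x: "x \<in> iwords ?A" "X = cls ?A a x" using Tcarrier_cls by blast
          have "pref x n \<in> F" using pref_set[OF x(1)] by (simp add: F_def fwords_iff)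
          then obtain k where k: "e k = pref x n" using bij_betw_imp_surj_on[OF be] by (metis imageE)
          have "x \<in> icyl ?A (e k)" using k pref_icyl[OF x(1)] by simp
          then show "X \<in> (\<Union>i. U i)" using x by (auto simp: U_def)
        qed
      qed
      have "hausdorff_pre ?M ?d s \<delta> ?M \<le> (\<Sum>i. hcontrib ?d s (U i))"
        unfolding hausdorff_pre_def by (rule INF_lower[OF Uin])
      also have "\<dots> \<le> (\<Sum>i. ennreal (Delta a (e i) powr s))"
      proof (rule suminf_le)
        fix i
        have ne: "U i \<noteq> {}" using diam_cyl(3)[OF eA(1)] by (simp add: U_def)
        have "diam' ?d (U i) powr s \<le> Delta a (e i) powr s"
          by (rule powr_mono2) (use s diam_cyl(1,2)[OF eA(1)] in \<open>auto simp: U_def\<close>)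
        then show "hcontrib ?d s (U i) \<le> ennreal (Delta a (e i) powr s)"
          using ne s by (simp add: hcontrib_def ennreal_leI)
      qed auto
      also have "\<dots> = (\<Sum>i. ennreal (L ^ n) * emeasure (Pm q) (icyl ?A (e i)))"
      proof -
        have "ennreal (Delta a (e i) powr s) = ennreal (L ^ n) * emeasure (Pm q) (icyl ?A (e i))" for i
        proof -
          have "emeasure (Pm q) (icyl ?A (e i)) = ennreal (Delta a (e i) powr s / L ^ n)"
            using emeasure_icyl[OF sq, of "e i"] PD[OF eA(1)] eA(2) by simp
          moreover have "Delta a (e i) powr s = L ^ n * (Delta a (e i) powr s / L ^ n)" using Lpos by simp
          ultimately show ?thesis using Lpos by (simp add: ennreal_mult[symmetric])
        qed
        then show ?thesis by simp
      qed
      also have "\<dots> = ennreal (L ^ n) * (\<Sum>i. emeasure (Pm q) (icyl ?A (e i)))" by (rule ennreal_suminf_cmult)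
      also have "(\<Sum>i. emeasure (Pm q) (icyl ?A (e i))) = emeasure (Pm q) (\<Union>i. icyl ?A (e i))"
      proof (rule suminf_emeasure)
        show "range (\<lambda>i. icyl ?A (e i)) \<subseteq> sets (Pm q)" using icyl_sets by blast
        show "disjoint_family (\<lambda>i. icyl ?A (e i))"
          unfolding disjoint_family_on_def
        proof (intro ballI impI)
          fix i j :: nat assume "i \<in> UNIV" "j \<in> UNIV" "i \<noteq> j"
          then have "e i \<noteq> e j" using be by (auto simp: bij_betw_def inj_def)
          then show "icyl ?A (e i) \<inter> icyl ?A (e j) = {}" using eA(2)[of i] eA(2)[of j]
            by (auto simp: icyl_def)
        qed
      qed
      also have "ennreal (L ^ n) * emeasure (Pm q) (\<Union>i. icyl ?A (e i)) \<le> ennreal (L ^ n) * 1"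
        by (intro mult_left_mono prob_space.emeasure_le_1[OF prob_space_Pm]) auto
      finally show ?thesis by simp
    qed
    obtain n0 where n0: "n0 \<ge> 1" "(1/2::real) ^ n0 < \<delta>" using half_pow_small[OF d, of 1] by auto
    have ev: "\<forall>n\<ge>n0. hausdorff_pre ?M ?d s \<delta> ?M \<le> ennreal (L ^ n)"
    proof (intro allI impI)
      fix n assume "n0 \<le> n"
      then have "(1/2::real) ^ n \<le> (1/2) ^ n0" by (intro power_decreasing) auto
      then have h2: "(1/2::real) ^ n \<le> \<delta>" using n0 by linarith
      have h1: "1 \<le> n" using n0 \<open>n0 \<le> n\<close> by linarith
      show "hausdorff_pre ?M ?d s \<delta> ?M \<le> ennreal (L ^ n)" by (rule bound[OF h1 h2])
    qed
    have lim: "(\<lambda>n. ennreal (L ^ n)) \<longlonglongrightarrow> ennreal 0"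
      by (rule tendsto_ennrealI) (rule LIMSEQ_power_zero, use Lpos L1 in simp)
    have "hausdorff_pre ?M ?d s \<delta> ?M \<le> ennreal 0" by (rule Lim_bounded2[OF lim ev])
    then show ?thesis by simp
  qed
  have "hausdorff_measure ?M ?d s ?M = 0"
    unfolding hausdorff_measure_def using pre0 by simp
  then have "ereal s \<in> {ereal t | t. 0 \<le> t \<and> hausdorff_measure ?M ?d t ?M = 0}" using s by auto
  then show ?thesis unfolding hausdorff_dim_def by (rule Inf_lower)
qed

theorem proposition8p1:
  fixes a :: "nat \<Rightarrow> real"
  assumes "is_weight a"
  shows "(\<forall>m::nat. m \<ge> 2 \<longrightarrow>
            (\<exists>!s::real. Psi m a s = 1) \<and>
            (\<forall>s. Psi m a s = 1 \<longrightarrow>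
               ahlfors_regular (Tcarrier {1..m} a) (Tdist {1..m} a) s))
       \<and> (\<forall>s::real. s > 0 \<and> (\<exists>L. (\<lambda>m. Psi m a s) \<longlonglongrightarrow> L \<and> L < 1) \<longrightarrow>
            hausdorff_dim (Tcarrier {1..} a) (Tdist {1..} a) \<le> ereal s)"
  using Psi_root[OF assms] ahlfors_m[OF assms] hdim_N[OF assms] by blast


end
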